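(* Consider the state-dependent DMC with causal CSI at the transmitter described in the context. For every $R_K\geq 0$ and $B\geq 0$, the covert capacity with causal CSI satisfies $$C_{\mathrm{c}}\leq \max I(V;Y),$$ where the maximum is over PMFs $P_V$ on a finite set $\mathcal{V}$ with $|\mathcal{V}|\leq \min\{|\mathcal{X}|+|\mathcal{Y}|+|\mathcal{Z}|-2,\ (|\mathcal{X}|-1)\cdot|\mathcal{S}|+1\}$ and functions $x:\mathcal{V}\times\mathcal{S}\to\mathcal{X}$, evaluated under the joint distribution $P_S(s)P_V(v)\mathbbm{1}\{x=x(v,s)\}P_{Y,Z|S,X}(y,z|s,x)$ (so $V$ is independent of $S$), subject to $P_Z=Q_0$ and $\mathrm{E}[b(X)]\leq B$.
   Context: A state-dependent discrete memoryless channel consists of finite alphabets $\mathcal{X}$ (input), $\mathcal{S}$ (state), $\mathcal{Y}$ (receiver output), $\mathcal{Z}$ (warden output), a state PMF $P_S$, and a channel law $P_{Y,Z|S,X}$. Over $n$ uses, the state sequence $S^n$ is IID $\sim P_S$, and given $(X^n,S^n)$ the pairs $(Y_i,Z_i)$ are conditionally independent with law $P_{Y,Z|S,X}(\cdot,\cdot|S_i,X_i)$. A designated "no input" symbol $x_0\in\mathcal{X}$ is fixed, and $Q_0(z)=\sum_{s}P_S(s)P_{Z|S,X}(z|s,x_0)$; $Q_0^{\times n}$ is its $n$-fold product. It is assumed that $\mathrm{supp}(Q_0)=\mathcal{Z}$. A cost function $b:\mathcal{X}\to[0,\infty)$ is given, with $b(x^n)=\frac1n\sum_{i=1}^n b(x_i)$.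 A secret key $K$ uniform on $[1:2^{nR_K}]$ and a message $M$ uniform on $[1:2^{nR}]$ are mutually independent and independent of $S^n$; $K$ is known to transmitter and receiver, while $S^n$ is known only to the transmitter. With causal CSI, an $(2^{nR},2^{nR_K},n)$ code consists of an encoder producing $X_i$ as a function of $(M,K,S^i)$ (and possibly private randomness of the transmitter independent of $(M,K,S^n)$), $i\in[1:n]$, and a decoder mapping $(Y^n,K)$ to $\hat M$. With noncausal CSI, the encoder produces $X^n$ from $(M,K,S^n)$ (and possibly such private randomness). $P_e^{(n)}=P(\hat M\neq M)$, and $\widehat{P}_{Z^n}$ is the distribution of the warden's output $Z^n$ induced by the code. A rate $R$ is achievable (for given $R_K,B$) if there is a sequence of codes with $\limsup_{n}\mathrm{E}[b(X^n)]\leq B$, $P_e^{(n)}\to 0$, and $D(\widehat{P}_{Z^n}\|Q_0^{\times n})\to 0$. The covert capacity $C_{\mathrm{c}}$ (causal CSI) resp. $C_{\mathrm{nc}}$ (noncausal CSI) is the supremum of achievable rates. *)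

theory Defs
  imports Complex_Main "HOL-Library.Liminf_Limsup" "HOL-Library.Extended_Real"
begin

text \<open>Deterministic causal encoder: X_i = e m k (s_1 ... s_i).
  Messages and keys are indexed from 0.  A (possibly randomized) encoder is
  a finite mixture (weights w) over a finite set E of deterministic causal encoders;
  this captures arbitrary private randomness independent of (M,K,S^n).\<close>
type_synonym ('s,'x) cenc = "nat \<Rightarrow> nat \<Rightarrow> 's list \<Rightarrow> 'x"

definition lists_n :: "nat \<Rightarrow> 'a list set" where
  "lists_n n = {xs. length xs = n}"

definition xseq :: "('s,'x) cenc \<Rightarrow> nat \<Rightarrow> nat \<Rightarrow> 's list \<Rightarrow> 'x list" where
  "xseq e m k ss = map (\<lambda>i. e m k (take (Suc i) ss)) [0..<length ss]"

definition ps_n :: "('s \<Rightarrow> real) \<Rightarrow> 's list \<Rightarrow> real" where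
  "ps_n PS ss = (\<Prod>i<length ss. PS (ss ! i))"

definition ch_n :: "('s \<Rightarrow> 'x \<Rightarrow> 'y \<Rightarrow> 'z \<Rightarrow> real) \<Rightarrow> 's list \<Rightarrow> 'x list \<Rightarrow> 'y list \<Rightarrow> 'z list \<Rightarrow> real" where
  "ch_n W ss xs ys zs = (\<Prod>i<length ss. W (ss ! i) (xs ! i) (ys ! i) (zs ! i))"

text \<open>Size of the index set [1:2^{nR}], read as ceiling of 2^{nR}.\<close>
definition set_size :: "nat \<Rightarrow> real \<Rightarrow> nat" where
  "set_size n R = nat \<lceil>2 powr (real n * R)\<rceil>"

definition joint_prob ::
  "('s \<Rightarrow> real) \<Rightarrow> ('s \<Rightarrow> 'x \<Rightarrow> 'y \<Rightarrow> 'z \<Rightarrow> real) \<Rightarrow> nat \<Rightarrow> nat \<Rightarrow>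
   (('s,'x) cenc \<Rightarrow> real) \<Rightarrow> ('s,'x) cenc \<Rightarrow> nat \<Rightarrow> nat \<Rightarrow> 's list \<Rightarrow> 'y list \<Rightarrow> 'z list \<Rightarrow> real" where
  "joint_prob PS W M K w e m k ss ys zs =
     (1 / real M) * (1 / real K) * w e * ps_n PS ss * ch_n W ss (xseq e m k ss) ys zs"

definition valid_code :: "('s,'x) cenc set \<Rightarrow> (('s,'x) cenc \<Rightarrow> real) \<Rightarrow> bool" where
  "valid_code E w \<longleftrightarrow> finite E \<and> (\<forall>e\<in>E. 0 \<le> w e) \<and> sum w E = 1"

definition err_prob ::
  "('s \<Rightarrow> real) \<Rightarrow> ('s \<Rightarrow> 'x \<Rightarrow> 'y \<Rightarrow> 'z \<Rightarrow> real) \<Rightarrow> nat \<Rightarrow> nat \<Rightarrow> nat \<Rightarrow>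
   ('s,'x) cenc set \<Rightarrow> (('s,'x) cenc \<Rightarrow> real) \<Rightarrow> (nat \<Rightarrow> 'y list \<Rightarrow> nat) \<Rightarrow> real" where
  "err_prob PS W n M K E w dec =
     (\<Sum>m<M. \<Sum>k<K. \<Sum>e\<in>E. \<Sum>ss\<in>lists_n n. \<Sum>ys\<in>lists_n n. \<Sum>zs\<in>lists_n n.
        joint_prob PS W M K w e m k ss ys zs * (if dec k ys \<noteq> m then 1 else 0))"

definition out_z ::
  "('s \<Rightarrow> real) \<Rightarrow> ('s \<Rightarrow> 'x \<Rightarrow> 'y \<Rightarrow> 'z \<Rightarrow> real) \<Rightarrow> nat \<Rightarrow> nat \<Rightarrow> nat \<Rightarrow>
   ('s,'x) cenc set \<Rightarrow> (('s,'x) cenc \<Rightarrow> real) \<Rightarrow> 'z list \<Rightarrow> real" where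
  "out_z PS W n M K E w zs =
     (\<Sum>m<M. \<Sum>k<K. \<Sum>e\<in>E. \<Sum>ss\<in>lists_n n. \<Sum>ys\<in>lists_n n.
        joint_prob PS W M K w e m k ss ys zs)"

definition exp_cost ::
  "('s \<Rightarrow> real) \<Rightarrow> ('s \<Rightarrow> 'x \<Rightarrow> 'y \<Rightarrow> 'z \<Rightarrow> real) \<Rightarrow> ('x \<Rightarrow> real) \<Rightarrow> nat \<Rightarrow> nat \<Rightarrow> nat \<Rightarrow>
   ('s,'x) cenc set \<Rightarrow> (('s,'x) cenc \<Rightarrow> real) \<Rightarrow> real" where
  "exp_cost PS W b n M K E w =
     (\<Sum>m<M. \<Sum>k<K. \<Sum>e\<in>E. \<Sum>ss\<in>lists_n n. \<Sum>ys\<in>lists_n n. \<Sum>zs\<in>lists_n n.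
        joint_prob PS W M K w e m k ss ys zs *
        ((\<Sum>i<n. b (xseq e m k ss ! i)) / real n))"

definition Q0 :: "('s \<Rightarrow> real) \<Rightarrow> ('s \<Rightarrow> 'x \<Rightarrow> 'y \<Rightarrow> 'z \<Rightarrow> real) \<Rightarrow> 'x \<Rightarrow> 'z \<Rightarrow> real" where
  "Q0 PS W x0 z = (\<Sum>s\<in>UNIV. PS s * (\<Sum>y\<in>UNIV. W s x0 y z))"

definition Q0_n :: "('s \<Rightarrow> real) \<Rightarrow> ('s \<Rightarrow> 'x \<Rightarrow> 'y \<Rightarrow> 'z \<Rightarrow> real) \<Rightarrow> 'x \<Rightarrow> 'z list \<Rightarrow> real" where
  "Q0_n PS W x0 zs = (\<Prod>i<length zs. Q0 PS W x0 (zs ! i))"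

definition kl_div :: "nat \<Rightarrow> ('a list \<Rightarrow> real) \<Rightarrow> ('a list \<Rightarrow> real) \<Rightarrow> real" where
  "kl_div n P Q = (\<Sum>zs\<in>lists_n n. if P zs = 0 then 0 else P zs * log 2 (P zs / Q zs))"

definition achievable_causal ::
  "('s \<Rightarrow> real) \<Rightarrow> ('s \<Rightarrow> 'x \<Rightarrow> 'y \<Rightarrow> 'z \<Rightarrow> real) \<Rightarrow> 'x \<Rightarrow> ('x \<Rightarrow> real) \<Rightarrow> real \<Rightarrow> real \<Rightarrow> real \<Rightarrow> bool" where
  "achievable_causal PS W x0 b RK B R \<longleftrightarrow>
     (\<exists>(E :: nat \<Rightarrow> ('s,'x) cenc set) w (dec :: nat \<Rightarrow> nat \<Rightarrow> 'y list \<Rightarrow> nat).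
        (\<forall>n. valid_code (E n) (w n)) \<and>
        limsup (\<lambda>n. ereal (exp_cost PS W b n (set_size n R) (set_size n RK) (E n) (w n))) \<le> ereal B \<and>
        (\<lambda>n. err_prob PS W n (set_size n R) (set_size n RK) (E n) (w n) (dec n)) \<longlonglongrightarrow> 0 \<and>
        (\<lambda>n. kl_div n (out_z PS W n (set_size n R) (set_size n RK) (E n) (w n)) (Q0_n PS W x0)) \<longlonglongrightarrow> 0)"

definition covert_capacity_causal ::
  "('s \<Rightarrow> real) \<Rightarrow> ('s \<Rightarrow> 'x \<Rightarrow> 'y \<Rightarrow> 'z \<Rightarrow> real) \<Rightarrow> 'x \<Rightarrow> ('x \<Rightarrow> real) \<Rightarrow> real \<Rightarrow> real \<Rightarrow> ereal" where
  "covert_capacity_causal PS W x0 b RK B = Sup (ereal ` {R. achievable_causal PS W x0 b RK B R})"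

definition mutual_info :: "('a \<Rightarrow> 'b \<Rightarrow> real) \<Rightarrow> 'a set \<Rightarrow> 'b set \<Rightarrow> real" where
  "mutual_info P A B = (\<Sum>a\<in>A. \<Sum>b\<in>B.
     if P a b = 0 then 0
     else P a b * log 2 (P a b / ((\<Sum>b'\<in>B. P a b') * (\<Sum>a'\<in>A. P a' b))))"

text \<open>V ranges over {0..<k}; P(v,y) = sum_s P_S(s) P_V(v) P_{Y|S,X}(y|s,x(v,s)).\<close>
definition joint_VY :: "('s \<Rightarrow> real) \<Rightarrow> ('s \<Rightarrow> 'x \<Rightarrow> 'y \<Rightarrow> 'z \<Rightarrow> real) \<Rightarrow> (nat \<Rightarrow> real) \<Rightarrow> (nat \<Rightarrow> 's \<Rightarrow> 'x) \<Rightarrow> nat \<Rightarrow> 'y \<Rightarrow> real" where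
  "joint_VY PS W PV xf v y = (\<Sum>s\<in>UNIV. PS s * PV v * (\<Sum>z\<in>UNIV. W s (xf v s) y z))"

definition causal_bound ::
  "('s \<Rightarrow> real) \<Rightarrow> ('s \<Rightarrow> 'x \<Rightarrow> 'y \<Rightarrow> 'z \<Rightarrow> real) \<Rightarrow> 'x \<Rightarrow> ('x \<Rightarrow> real) \<Rightarrow> real \<Rightarrow> ereal" where
  "causal_bound PS W x0 b B = Sup (ereal ` {mutual_info (joint_VY PS W PV xf) {..<k} UNIV | k PV xf.
       1 \<le> k \<and>
       k \<le> min (card (UNIV :: 'x set) + card (UNIV :: 'y set) + card (UNIV :: 'z set) - 2) ((card (UNIV :: 'x set) - 1) * card (UNIV :: 's set) + 1) \<and>
       (\<forall>v<k. 0 \<le> PV v) \<and> (\<Sum>v<k. PV v) = 1 \<and>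
       (\<forall>z. (\<Sum>v<k. \<Sum>s\<in>UNIV. PV v * PS s * (\<Sum>y\<in>UNIV. W s (xf v s) y z)) = Q0 PS W x0 z) \<and>
       (\<Sum>v<k. \<Sum>s\<in>UNIV. PV v * PS s * b (xf v s)) \<le> B})"

end

theory Submission
  imports Defs "HOL-Analysis.Analysis" "HOL-Real_Asymp.Real_Asymp"
begin


lemma finite_lists_n[simp]: "finite (lists_n n :: ('a::finite) list set)"
proof -
  have "{xs :: 'a list. length xs = n} = {xs. set xs \<subseteq> UNIV \<and> length xs = n}" by auto
  thus ?thesis unfolding lists_n_def using finite_lists_length_eq[of "UNIV :: 'a set" n] by simp
qed

lemma lists_n_0[simp]: "lists_n 0 = {[]}"
  unfolding lists_n_def by auto

lemma sum_lists_n_snoc: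
  fixes f :: "('a::finite) list \<Rightarrow> 'b::comm_monoid_add"
  shows "(\<Sum>xs\<in>lists_n (Suc n). f xs) = (\<Sum>xs\<in>lists_n n. \<Sum>x\<in>UNIV. f (xs @ [x]))"
proof -
  have bij: "bij_betw (\<lambda>(xs,x). xs @ [x]) (lists_n n \<times> UNIV) (lists_n (Suc n))"
  proof (rule bij_betwI[where g="\<lambda>ys. (butlast ys, last ys)"])
    show "(\<lambda>(xs, x). xs @ [x]) \<in> lists_n n \<times> UNIV \<rightarrow> lists_n (Suc n)" by (auto simp: lists_n_def)
    show "(\<lambda>ys. (butlast ys, last ys)) \<in> lists_n (Suc n) \<rightarrow> lists_n n \<times> UNIV" by (auto simp: lists_n_def)
    show "\<And>p. p \<in> lists_n n \<times> UNIV \<Longrightarrow> (butlast ((\<lambda>(xs, x). xs @ [x]) p), last ((\<lambda>(xs, x). xs @ [x]) p)) = p" by auto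
    show "\<And>ys. ys \<in> lists_n (Suc n) \<Longrightarrow> (\<lambda>(xs, x). xs @ [x]) (butlast ys, last ys) = ys"
      by (auto simp: lists_n_def intro!: append_butlast_last_id)
  qed
  have "(\<Sum>xs\<in>lists_n (Suc n). f xs) = (\<Sum>p\<in>lists_n n \<times> UNIV. f ((\<lambda>(xs,x). xs @ [x]) p))"
    using sum.reindex_bij_betw[OF bij, of f] by simp
  also have "\<dots> = (\<Sum>xs\<in>lists_n n. \<Sum>x\<in>UNIV. f (xs @ [x]))"
    by (subst sum.cartesian_product) (auto intro!: sum.cong)
  finally show ?thesis .
qed

lemma sum_lists_n_append:
  fixes f :: "('a::finite) list \<Rightarrow> 'b::comm_monoid_add"
  shows "(\<Sum>xs\<in>lists_n (i + j). f xs) = (\<Sum>a\<in>lists_n i. \<Sum>c\<in>lists_n j. f (a @ c))"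
proof -
  have bij: "bij_betw (\<lambda>(a,c). a @ c) (lists_n i \<times> lists_n j) (lists_n (i + j))"
  proof (rule bij_betwI[where g="\<lambda>ys. (take i ys, drop i ys)"])
    show "(\<lambda>(a, c). a @ c) \<in> lists_n i \<times> lists_n j \<rightarrow> lists_n (i + j)" by (auto simp: lists_n_def)
    show "(\<lambda>ys. (take i ys, drop i ys)) \<in> lists_n (i + j) \<rightarrow> lists_n i \<times> lists_n j" by (auto simp: lists_n_def)
    show "\<And>p. p \<in> lists_n i \<times> lists_n j \<Longrightarrow> (take i ((\<lambda>(a, c). a @ c) p), drop i ((\<lambda>(a, c). a @ c) p)) = p"
      by (auto simp: lists_n_def)
    show "\<And>ys. ys \<in> lists_n (i + j) \<Longrightarrow> (\<lambda>(a, c). a @ c) (take i ys, drop i ys) = ys" by auto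
  qed
  have "(\<Sum>xs\<in>lists_n (i+j). f xs) = (\<Sum>p\<in>lists_n i \<times> lists_n j. f ((\<lambda>(a,c). a @ c) p))"
    using sum.reindex_bij_betw[OF bij, of f] by simp
  also have "\<dots> = (\<Sum>a\<in>lists_n i. \<Sum>c\<in>lists_n j. f (a @ c))"
    by (subst sum.cartesian_product) (auto intro!: sum.cong)
  finally show ?thesis .
qed

lemma sum_lists_n_Cons:
  fixes f :: "('a::finite) list \<Rightarrow> 'b::comm_monoid_add"
  shows "(\<Sum>xs\<in>lists_n (Suc n). f xs) = (\<Sum>x\<in>UNIV. \<Sum>xs\<in>lists_n n. f (x # xs))"
proof -
  have "(\<Sum>xs\<in>lists_n (1 + n). f xs) = (\<Sum>a\<in>lists_n 1. \<Sum>c\<in>lists_n n. f (a @ c))"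
    by (rule sum_lists_n_append)
  also have "\<dots> = (\<Sum>x\<in>UNIV. \<Sum>c\<in>lists_n n. f (x # c))"
    using sum_lists_n_snoc[where n=0 and f="\<lambda>a. \<Sum>c\<in>lists_n n. f (a @ c)"] by simp
  finally show ?thesis by simp
qed

lemma sum_prod_lists_n:
  fixes F :: "nat \<Rightarrow> 'a::finite \<Rightarrow> 'b::comm_semiring_1"
  shows "(\<Sum>xs\<in>lists_n n. \<Prod>i<n. F i (xs ! i)) = (\<Prod>i<n. \<Sum>x\<in>UNIV. F i x)"
proof (induction n)
  case 0 thus ?case by simp
next
  case (Suc n)
  have "(\<Sum>xs\<in>lists_n (Suc n). \<Prod>i<Suc n. F i (xs ! i))
      = (\<Sum>xs\<in>lists_n n. \<Sum>x\<in>UNIV. \<Prod>i<Suc n. F i ((xs @ [x]) ! i))"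
    by (rule sum_lists_n_snoc)
  also have "\<dots> = (\<Sum>xs\<in>lists_n n. \<Sum>x\<in>UNIV. (\<Prod>i<n. F i (xs ! i)) * F n x)"
  proof (intro sum.cong refl)
    fix xs :: "'a list" and x :: 'a assume "xs \<in> lists_n n"
    hence l: "length xs = n" by (simp add: lists_n_def)
    have "(\<Prod>i<Suc n. F i ((xs @ [x]) ! i)) = (\<Prod>i<n. F i ((xs @ [x]) ! i)) * F n ((xs @ [x]) ! n)"
      by simp
    also have "(\<Prod>i<n. F i ((xs @ [x]) ! i)) = (\<Prod>i<n. F i (xs ! i))"
      by (intro prod.cong refl) (simp add: l nth_append)
    finally show "(\<Prod>i<Suc n. F i ((xs @ [x]) ! i)) = (\<Prod>i<n. F i (xs ! i)) * F n x"
      using l by (simp add: nth_append)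
  qed
  also have "\<dots> = (\<Sum>xs\<in>lists_n n. \<Prod>i<n. F i (xs ! i)) * (\<Sum>x\<in>UNIV. F n x)"
    by (simp add: sum_product)
  finally show ?case using Suc by simp
qed

lemma sum_prod_lists_n2:
  fixes F :: "nat \<Rightarrow> 'a::finite \<Rightarrow> 'c::finite \<Rightarrow> 'b::comm_semiring_1"
  shows "(\<Sum>ys\<in>lists_n n. \<Sum>zs\<in>lists_n n. \<Prod>i<n. F i (ys ! i) (zs ! i)) = (\<Prod>i<n. \<Sum>y\<in>UNIV. \<Sum>z\<in>UNIV. F i y z)"
proof (induction n)
  case 0 thus ?case by simp
next
  case (Suc n)
  have "(\<Sum>ys\<in>lists_n (Suc n). \<Sum>zs\<in>lists_n (Suc n). \<Prod>i<Suc n. F i (ys ! i) (zs ! i))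
      = (\<Sum>ys\<in>lists_n n. \<Sum>y\<in>UNIV. \<Sum>zs\<in>lists_n n. \<Sum>z\<in>UNIV. \<Prod>i<Suc n. F i ((ys @ [y]) ! i) ((zs @ [z]) ! i))"
    by (simp add: sum_lists_n_snoc)
  also have "\<dots> = (\<Sum>ys\<in>lists_n n. \<Sum>y\<in>UNIV. \<Sum>zs\<in>lists_n n. \<Sum>z\<in>UNIV. (\<Prod>i<n. F i (ys ! i) (zs ! i)) * F n y z)"
  proof (intro sum.cong refl)
    fix ys :: "'a list" and y :: 'a and zs :: "'c list" and z :: 'c assume "ys \<in> lists_n n" "zs \<in> lists_n n"
    hence l: "length ys = n" "length zs = n" by (auto simp add: lists_n_def)
    have "(\<Prod>i<n. F i ((ys @ [y]) ! i) ((zs @ [z]) ! i)) = (\<Prod>i<n. F i (ys ! i) (zs ! i))"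
      by (intro prod.cong refl) (simp add: l nth_append)
    thus "(\<Prod>i<Suc n. F i ((ys @ [y]) ! i) ((zs @ [z]) ! i)) = (\<Prod>i<n. F i (ys ! i) (zs ! i)) * F n y z"
      using l by (simp add: nth_append)
  qed
  also have "\<dots> = (\<Sum>ys\<in>lists_n n. \<Sum>zs\<in>lists_n n. \<Prod>i<n. F i (ys ! i) (zs ! i)) * (\<Sum>y\<in>UNIV. \<Sum>z\<in>UNIV. F n y z)"
  proof -
    have "\<And>ys. (\<Sum>y\<in>UNIV. \<Sum>zs\<in>lists_n n. \<Sum>z\<in>UNIV. (\<Prod>i<n. F i (ys ! i) (zs ! i)) * F n y z)
       = (\<Sum>zs\<in>lists_n n. (\<Prod>i<n. F i (ys ! i) (zs ! i)) * (\<Sum>y\<in>UNIV. \<Sum>z\<in>UNIV. F n y z))"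
      by (subst sum.swap) (simp add: sum_distrib_left)
    thus ?thesis by (simp add: sum_distrib_right)
  qed
  finally show ?case using Suc by simp
qed



lemma ps_n_snoc: "ps_n P (xs @ [x]) = ps_n P xs * P x"
proof -
  have "ps_n P (xs @ [x]) = (\<Prod>i<Suc (length xs). P ((xs @ [x]) ! i))" by (simp add: ps_n_def)
  also have "\<dots> = (\<Prod>i<length xs. P ((xs @ [x]) ! i)) * P x" by (simp add: nth_append)
  also have "(\<Prod>i<length xs. P ((xs @ [x]) ! i)) = ps_n P xs"
    unfolding ps_n_def by (intro prod.cong refl) (simp add: nth_append)
  finally show ?thesis .
qed

lemma ps_n_Nil[simp]: "ps_n P [] = 1" by (simp add: ps_n_def)

lemma ps_n_append: "ps_n P (a @ c) = ps_n P a * ps_n P c"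
  by (induction c rule: rev_induct) (simp_all add: ps_n_snoc flip: append_assoc)

lemma ps_n_Cons: "ps_n P (x # c) = P x * ps_n P c"
  using ps_n_append[of P "[x]" c] ps_n_snoc[of P "[]" x] by simp

lemma ps_n_lists: "xs \<in> lists_n n \<Longrightarrow> ps_n P xs = (\<Prod>i<n. P (xs ! i))"
  by (simp add: ps_n_def lists_n_def)

lemma length_xseq[simp]: "length (xseq e m k ss) = length ss"
  by (simp add: xseq_def)

lemma nth_xseq: "j < length ss \<Longrightarrow> xseq e m k ss ! j = e m k (take j ss @ [ss ! j])"
  by (simp add: xseq_def take_Suc_conv_app_nth)

locale chan =
  fixes PS :: "'s::finite \<Rightarrow> real"
    and W :: "'s \<Rightarrow> 'x::finite \<Rightarrow> 'y::finite \<Rightarrow> 'z::finite \<Rightarrow> real"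
  assumes PS_nn: "\<And>s. 0 \<le> PS s" and PS_sum: "(\<Sum>s\<in>UNIV. PS s) = 1"
    and W_nn: "\<And>s x y z. 0 \<le> W s x y z"
    and W_sum: "\<And>s x. (\<Sum>y\<in>UNIV. \<Sum>z\<in>UNIV. W s x y z) = 1"
begin

lemma ps_nn: "0 \<le> ps_n PS ss"
  unfolding ps_n_def by (intro prod_nonneg) (simp add: PS_nn)

lemma sum_ps: "(\<Sum>ss\<in>lists_n n. ps_n PS ss) = 1"
proof -
  have "(\<Sum>ss\<in>lists_n n. ps_n PS ss) = (\<Sum>ss\<in>lists_n n. \<Prod>i<n. PS (ss ! i))"
    by (intro sum.cong refl) (simp add: ps_n_lists)
  also have "\<dots> = 1" using sum_prod_lists_n[of "\<lambda>i. PS" n] by (simp add: PS_sum)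
  finally show ?thesis .
qed

lemma ch_nn: "0 \<le> ch_n W ss xs ys zs"
  unfolding ch_n_def by (intro prod_nonneg) (simp add: W_nn)

lemma sum_ch_at:
  assumes "ss \<in> lists_n n" "i < n"
  shows "(\<Sum>ys\<in>lists_n n. \<Sum>zs\<in>lists_n n. ch_n W ss xs ys zs * f (ys ! i) (zs ! i))
       = (\<Sum>y\<in>UNIV. \<Sum>z\<in>UNIV. W (ss ! i) (xs ! i) y z * f y z)"
proof -
  have l: "length ss = n" using assms by (simp add: lists_n_def)
  define G where "G j y z = W (ss ! j) (xs ! j) y z * (if j = i then f y z else 1)" for j y z
  have "\<And>ys zs. ch_n W ss xs ys zs * f (ys ! i) (zs ! i) = (\<Prod>j<n. G j (ys ! j) (zs ! j))"
    using assms(2) by (simp add: ch_n_def G_def l prod.distrib)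
  hence "(\<Sum>ys\<in>lists_n n. \<Sum>zs\<in>lists_n n. ch_n W ss xs ys zs * f (ys ! i) (zs ! i))
       = (\<Prod>j<n. \<Sum>y\<in>UNIV. \<Sum>z\<in>UNIV. G j y z)"
    by (simp add: sum_prod_lists_n2)
  also have "\<dots> = (\<Prod>j<n. if j = i then (\<Sum>y\<in>UNIV. \<Sum>z\<in>UNIV. W (ss ! i) (xs ! i) y z * f y z) else 1)"
    by (intro prod.cong refl) (simp add: G_def W_sum)
  also have "\<dots> = (\<Sum>y\<in>UNIV. \<Sum>z\<in>UNIV. W (ss ! i) (xs ! i) y z * f y z)"
    using assms(2) by simp
  finally show ?thesis .
qed

lemma sum_ps_at:
  assumes "i < n"
  shows "(\<Sum>ss\<in>lists_n n. ps_n PS ss * H (take i ss) (ss ! i))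
       = (\<Sum>a\<in>lists_n i. ps_n PS a * (\<Sum>s\<in>UNIV. PS s * H a s))"
proof -
  obtain d where n: "n = i + Suc d" using assms by (intro that[of "n - i - 1"]) simp
  have "(\<Sum>ss\<in>lists_n n. ps_n PS ss * H (take i ss) (ss ! i))
      = (\<Sum>a\<in>lists_n i. \<Sum>c'\<in>lists_n (Suc d). ps_n PS (a @ c') * H (take i (a @ c')) ((a @ c') ! i))"
    unfolding n by (rule sum_lists_n_append)
  also have "\<dots> = (\<Sum>a\<in>lists_n i. \<Sum>s\<in>UNIV. \<Sum>c\<in>lists_n d. ps_n PS (a @ s # c) * H (take i (a @ s # c)) ((a @ s # c) ! i))"
    by (intro sum.cong refl) (rule sum_lists_n_Cons)
  also have "\<dots> = (\<Sum>a\<in>lists_n i. \<Sum>s\<in>UNIV. \<Sum>c\<in>lists_n d. ps_n PS a * (PS s * H a s) * ps_n PS c)"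
  proof (intro sum.cong refl)
    fix a :: "'s list" and s c assume "a \<in> lists_n i"
    hence l: "length a = i" by (simp add: lists_n_def)
    have "take i (a @ s # c) = a" "(a @ s # c) ! i = s" using l by auto
    thus "ps_n PS (a @ s # c) * H (take i (a @ s # c)) ((a @ s # c) ! i) = ps_n PS a * (PS s * H a s) * ps_n PS c"
      by (simp add: ps_n_append ps_n_Cons)
  qed
  also have "\<dots> = (\<Sum>a\<in>lists_n i. \<Sum>s\<in>UNIV. ps_n PS a * (PS s * H a s))"
    by (simp add: sum_distrib_left[symmetric] sum_ps)
  also have "\<dots> = (\<Sum>a\<in>lists_n i. ps_n PS a * (\<Sum>s\<in>UNIV. PS s * H a s))"
    by (simp add: sum_distrib_left)
  finally show ?thesis .
qed

lemma marg:
  assumes "i < n"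
  shows "(\<Sum>ss\<in>lists_n n. \<Sum>ys\<in>lists_n n. \<Sum>zs\<in>lists_n n.
            ps_n PS ss * ch_n W ss (xseq e m k ss) ys zs * f (take i ss) (ss ! i) (ys ! i) (zs ! i))
       = (\<Sum>a\<in>lists_n i. ps_n PS a * (\<Sum>s\<in>UNIV. \<Sum>y\<in>UNIV. \<Sum>z\<in>UNIV. PS s * W s (e m k (a @ [s])) y z * f a s y z))"
proof -
  have "(\<Sum>ss\<in>lists_n n. \<Sum>ys\<in>lists_n n. \<Sum>zs\<in>lists_n n.
            ps_n PS ss * ch_n W ss (xseq e m k ss) ys zs * f (take i ss) (ss ! i) (ys ! i) (zs ! i))
      = (\<Sum>ss\<in>lists_n n. ps_n PS ss * (\<Sum>ys\<in>lists_n n. \<Sum>zs\<in>lists_n n.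
            ch_n W ss (xseq e m k ss) ys zs * f (take i ss) (ss ! i) (ys ! i) (zs ! i)))"
    by (simp add: sum_distrib_left mult.assoc)
  also have "\<dots> = (\<Sum>ss\<in>lists_n n. ps_n PS ss * (\<Sum>y\<in>UNIV. \<Sum>z\<in>UNIV.
            W (ss ! i) (e m k (take i ss @ [ss ! i])) y z * f (take i ss) (ss ! i) y z))"
  proof (intro sum.cong refl arg_cong2[where f="(*)"])
    fix ss :: "'s list" assume ss: "ss \<in> lists_n n"
    hence "i < length ss" using assms by (simp add: lists_n_def)
    thus "(\<Sum>ys\<in>lists_n n. \<Sum>zs\<in>lists_n n. ch_n W ss (xseq e m k ss) ys zs * f (take i ss) (ss ! i) (ys ! i) (zs ! i))
        = (\<Sum>y\<in>UNIV. \<Sum>z\<in>UNIV. W (ss ! i) (e m k (take i ss @ [ss ! i])) y z * f (take i ss) (ss ! i) y z)"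
      using sum_ch_at[OF ss assms, of "xseq e m k ss" "\<lambda>y z. f (take i ss) (ss ! i) y z"]
      by (simp add: nth_xseq)
  qed
  also have "\<dots> = (\<Sum>a\<in>lists_n i. ps_n PS a * (\<Sum>s\<in>UNIV. PS s * (\<Sum>y\<in>UNIV. \<Sum>z\<in>UNIV.
            W s (e m k (a @ [s])) y z * f a s y z)))"
    by (rule sum_ps_at[OF assms, where H="\<lambda>a s. \<Sum>y\<in>UNIV. \<Sum>z\<in>UNIV. W s (e m k (a @ [s])) y z * f a s y z"])
  also have "\<dots> = (\<Sum>a\<in>lists_n i. ps_n PS a * (\<Sum>s\<in>UNIV. \<Sum>y\<in>UNIV. \<Sum>z\<in>UNIV. PS s * W s (e m k (a @ [s])) y z * f a s y z))"
    by (simp add: sum_distrib_left mult.assoc)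
  finally show ?thesis .
qed

end


lemma sum_regroup:
  fixes h :: "'a \<Rightarrow> real" and \<phi> :: "'a \<Rightarrow> 'u::finite"
  assumes "finite A"
  shows "(\<Sum>a\<in>A. h a * G (\<phi> a)) = (\<Sum>u\<in>UNIV. (\<Sum>a\<in>A. h a * (if \<phi> a = u then 1 else 0)) * G u)"
proof -
  have "(\<Sum>u\<in>UNIV. (\<Sum>a\<in>A. h a * (if \<phi> a = u then 1 else 0)) * G u)
      = (\<Sum>a\<in>A. \<Sum>u\<in>UNIV. h a * (if \<phi> a = u then G u else 0))"
    by (subst sum.swap) (auto simp: sum_distrib_right intro!: sum.cong)
  also have "\<dots> = (\<Sum>a\<in>A. h a * G (\<phi> a))"
    by (simp add: if_distrib cong: if_cong)
  finally show ?thesis by simp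
qed

context chan begin

definition WY :: "'s \<Rightarrow> 'x \<Rightarrow> 'y \<Rightarrow> real" where
  "WY s x y = (\<Sum>z\<in>UNIV. W s x y z)"
definition TY :: "('s \<Rightarrow> 'x) \<Rightarrow> 'y \<Rightarrow> real" where
  "TY u y = (\<Sum>s\<in>UNIV. PS s * WY s (u s) y)"
definition TZ :: "('s \<Rightarrow> 'x) \<Rightarrow> 'z \<Rightarrow> real" where
  "TZ u z = (\<Sum>s\<in>UNIV. PS s * (\<Sum>y\<in>UNIV. W s (u s) y z))"
definition rho :: "('s \<Rightarrow> 'x) \<Rightarrow> 's \<Rightarrow> 'y \<Rightarrow> real" where
  "rho u s y = PS s * WY s (u s) y / TY u y"

lemma WY_nn: "0 \<le> WY s x y" unfolding WY_def by (intro sum_nonneg) (simp add: W_nn)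
lemma TY_nn: "0 \<le> TY u y" unfolding TY_def by (intro sum_nonneg mult_nonneg_nonneg PS_nn WY_nn)
lemma TZ_nn: "0 \<le> TZ u z" unfolding TZ_def by (intro sum_nonneg mult_nonneg_nonneg PS_nn W_nn)
lemma rho_nn: "0 \<le> rho u s y" unfolding rho_def by (intro divide_nonneg_nonneg mult_nonneg_nonneg PS_nn WY_nn TY_nn)

lemma TY_sum: "(\<Sum>y\<in>UNIV. TY u y) = 1"
proof -
  have "(\<Sum>y\<in>UNIV. TY u y) = (\<Sum>s\<in>UNIV. PS s * (\<Sum>y\<in>UNIV. WY s (u s) y))"
    unfolding TY_def by (subst sum.swap) (simp add: sum_distrib_left)
  also have "\<dots> = 1" by (simp add: WY_def W_sum PS_sum)
  finally show ?thesis .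
qed

lemma TZ_sum: "(\<Sum>z\<in>UNIV. TZ u z) = 1"
proof -
  have "(\<Sum>z\<in>UNIV. TZ u z) = (\<Sum>s\<in>UNIV. PS s * (\<Sum>z\<in>UNIV. \<Sum>y\<in>UNIV. W s (u s) y z))"
    unfolding TZ_def by (subst sum.swap) (simp add: sum_distrib_left)
  also have "\<dots> = 1" by (subst sum.swap) (simp add: W_sum PS_sum)
  finally show ?thesis .
qed

lemma rho_sum: "(\<Sum>s\<in>UNIV. rho u s y) \<le> 1"
proof -
  have "(\<Sum>s\<in>UNIV. rho u s y) = TY u y / TY u y"
    unfolding rho_def by (simp add: sum_divide_distrib[symmetric] TY_def)
  also have "\<dots> \<le> 1" by (cases "TY u y = 0") auto
  finally show ?thesis .
qed

lemma seq_rho: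
  "(\<Sum>ss\<in>lists_n n. \<Prod>j<n. rho (\<lambda>s. g (take j ss @ [s])) (ss ! j) (ys ! j)) \<le> 1"
proof (induction n)
  case 0 thus ?case by simp
next
  case (Suc n)
  have "(\<Sum>ss\<in>lists_n (Suc n). \<Prod>j<Suc n. rho (\<lambda>s. g (take j ss @ [s])) (ss ! j) (ys ! j))
      = (\<Sum>ss\<in>lists_n n. \<Sum>x\<in>UNIV. \<Prod>j<Suc n. rho (\<lambda>s. g (take j (ss @ [x]) @ [s])) ((ss @ [x]) ! j) (ys ! j))"
    by (rule sum_lists_n_snoc)
  also have "\<dots> = (\<Sum>ss\<in>lists_n n. (\<Prod>j<n. rho (\<lambda>s. g (take j ss @ [s])) (ss ! j) (ys ! j))
                     * (\<Sum>x\<in>UNIV. rho (\<lambda>s. g (ss @ [s])) x (ys ! n)))"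
  proof (intro sum.cong refl)
    fix ss :: "'s list" assume "ss \<in> lists_n n"
    hence l: "length ss = n" by (simp add: lists_n_def)
    have "\<And>x. (\<Prod>j<n. rho (\<lambda>s. g (take j (ss @ [x]) @ [s])) ((ss @ [x]) ! j) (ys ! j))
           = (\<Prod>j<n. rho (\<lambda>s. g (take j ss @ [s])) (ss ! j) (ys ! j))"
      by (intro prod.cong refl) (simp add: l nth_append)
    thus "(\<Sum>x\<in>UNIV. \<Prod>j<Suc n. rho (\<lambda>s. g (take j (ss @ [x]) @ [s])) ((ss @ [x]) ! j) (ys ! j))
        = (\<Prod>j<n. rho (\<lambda>s. g (take j ss @ [s])) (ss ! j) (ys ! j)) * (\<Sum>x\<in>UNIV. rho (\<lambda>s. g (ss @ [s])) x (ys ! n))"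
      by (simp add: l sum_distrib_left nth_append)
  qed
  also have "\<dots> \<le> (\<Sum>ss\<in>lists_n n. (\<Prod>j<n. rho (\<lambda>s. g (take j ss @ [s])) (ss ! j) (ys ! j)))"
    by (intro sum_mono mult_left_le prod_nonneg rho_sum rho_nn)
  also have "\<dots> \<le> 1" by (rule Suc.IH)
  finally show ?case .
qed

end


lemma sum3_swap:
  "(\<Sum>m\<in>A. \<Sum>k\<in>B. \<Sum>e\<in>C. \<Sum>u\<in>D. f m k e u) = (\<Sum>u\<in>D. \<Sum>m\<in>A. \<Sum>k\<in>B. \<Sum>e\<in>C. f m k e u)"
proof -
  have "(\<Sum>m\<in>A. \<Sum>k\<in>B. \<Sum>e\<in>C. \<Sum>u\<in>D. f m k e u) = (\<Sum>m\<in>A. \<Sum>k\<in>B. \<Sum>u\<in>D. \<Sum>e\<in>C. f m k e u)"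
    by (intro sum.cong refl) (rule sum.swap)
  also have "\<dots> = (\<Sum>m\<in>A. \<Sum>u\<in>D. \<Sum>k\<in>B. \<Sum>e\<in>C. f m k e u)"
    by (intro sum.cong refl) (rule sum.swap)
  also have "\<dots> = (\<Sum>u\<in>D. \<Sum>m\<in>A. \<Sum>k\<in>B. \<Sum>e\<in>C. f m k e u)"
    by (rule sum.swap)
  finally show ?thesis .
qed

locale code = chan PS W for PS :: "'s::finite \<Rightarrow> real" and W :: "'s \<Rightarrow> 'x::finite \<Rightarrow> 'y::finite \<Rightarrow> 'z::finite \<Rightarrow> real" +
  fixes n M K :: nat and E :: "('s,'x) cenc set" and w :: "('s,'x) cenc \<Rightarrow> real"
  assumes finE: "finite E" and w_nn: "\<And>e. e \<in> E \<Longrightarrow> 0 \<le> w e" and w_sum: "sum w E = 1"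
    and n_pos: "0 < n" and M_pos: "0 < M" and K_pos: "0 < K"
begin

lemma W_out: "(\<Sum>s\<in>UNIV. \<Sum>y\<in>UNIV. \<Sum>z\<in>UNIV. PS s * W s (u s) y z * h s) = (\<Sum>s\<in>UNIV. PS s * h s)"
proof -
  have "\<And>s. (\<Sum>y\<in>UNIV. \<Sum>z\<in>UNIV. PS s * W s (u s) y z * h s) = PS s * h s * (\<Sum>y\<in>UNIV. \<Sum>z\<in>UNIV. W s (u s) y z)"
    by (simp add: sum_distrib_left sum_distrib_right mult_ac)
  thus ?thesis by (simp add: W_sum)
qed

definition J where "J e m k ss ys zs = joint_prob PS W M K w e m k ss ys zs"

definition Jsum :: "(nat \<Rightarrow> nat \<Rightarrow> ('s,'x) cenc \<Rightarrow> 's list \<Rightarrow> 'y list \<Rightarrow> 'z list \<Rightarrow> real) \<Rightarrow> real" where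
  "Jsum F = (\<Sum>m<M. \<Sum>k<K. \<Sum>e\<in>E. \<Sum>ss\<in>lists_n n. \<Sum>ys\<in>lists_n n. \<Sum>zs\<in>lists_n n. F m k e ss ys zs)"

lemma Jsum_add: "Jsum (\<lambda>m k e ss ys zs. F m k e ss ys zs + G m k e ss ys zs) = Jsum F + Jsum G"
  unfolding Jsum_def by (simp add: sum.distrib)

lemma Jsum_cmult: "Jsum (\<lambda>m k e ss ys zs. c * F m k e ss ys zs) = c * Jsum F"
  unfolding Jsum_def by (simp add: sum_distrib_left)

lemma Jsum_sum: "finite I \<Longrightarrow> Jsum (\<lambda>m k e ss ys zs. \<Sum>i\<in>I. F i m k e ss ys zs) = (\<Sum>i\<in>I. Jsum (F i))"
proof (induction I rule: finite_induct)
  case empty thus ?case by (simp add: Jsum_def)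
next
  case (insert x F)
  thus ?case by (simp add: Jsum_add)
qed

lemma Jsum_mono: "(\<And>m k e ss ys zs. m < M \<Longrightarrow> k < K \<Longrightarrow> e \<in> E \<Longrightarrow> ss \<in> lists_n n \<Longrightarrow> ys \<in> lists_n n \<Longrightarrow> zs \<in> lists_n n \<Longrightarrow> F m k e ss ys zs \<le> G m k e ss ys zs) \<Longrightarrow> Jsum F \<le> Jsum G"
  unfolding Jsum_def by (intro sum_mono) auto

lemma Jsum_cong: "(\<And>m k e ss ys zs. m < M \<Longrightarrow> k < K \<Longrightarrow> e \<in> E \<Longrightarrow> ss \<in> lists_n n \<Longrightarrow> ys \<in> lists_n n \<Longrightarrow> zs \<in> lists_n n \<Longrightarrow> F m k e ss ys zs = G m k e ss ys zs) \<Longrightarrow> Jsum F = Jsum G"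
  unfolding Jsum_def by (intro sum.cong) auto

lemma Jsum_nonneg: "(\<And>m k e ss ys zs. m < M \<Longrightarrow> k < K \<Longrightarrow> e \<in> E \<Longrightarrow> ss \<in> lists_n n \<Longrightarrow> ys \<in> lists_n n \<Longrightarrow> zs \<in> lists_n n \<Longrightarrow> 0 \<le> F m k e ss ys zs) \<Longrightarrow> 0 \<le> Jsum F"
  unfolding Jsum_def by (intro sum_nonneg) auto

lemma J_nn: "e \<in> E \<Longrightarrow> 0 \<le> J e m k ss ys zs"
  unfolding J_def joint_prob_def by (intro mult_nonneg_nonneg ps_nn ch_nn w_nn) auto

definition cw where "cw e = (1 / real M) * (1 / real K) * w e"

lemma J_cw: "J e m k ss ys zs = cw e * (ps_n PS ss * ch_n W ss (xseq e m k ss) ys zs)"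
  unfolding J_def joint_prob_def cw_def by simp

lemma sum_cw: "(\<Sum>m<M. \<Sum>k<K. \<Sum>e\<in>E. cw e) = 1"
proof -
  have "(\<Sum>e\<in>E. cw e) = 1 / (real M * real K)"
    unfolding cw_def sum_distrib_left[symmetric] w_sum by simp
  thus ?thesis using M_pos K_pos by simp
qed

lemma cw_nn: "e \<in> E \<Longrightarrow> 0 \<le> cw e" unfolding cw_def using w_nn by simp

definition PU :: "nat \<Rightarrow> ('s \<Rightarrow> 'x) \<Rightarrow> real" where
  "PU i u = (\<Sum>m<M. \<Sum>k<K. \<Sum>e\<in>E. cw e * (\<Sum>a\<in>lists_n i. ps_n PS a * (if (\<lambda>s. e m k (a @ [s])) = u then 1 else 0)))"

lemma sum_ind: "(\<Sum>u\<in>UNIV. h * (if a = u then 1 else 0)) = (h::real)" for a :: "'u::finite"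
proof -
  have "(\<Sum>u\<in>UNIV. h * (if a = u then 1 else 0)) = (\<Sum>u\<in>UNIV. if a = u then h else 0)"
    by (rule sum.cong) auto
  thus ?thesis by simp
qed

lemma PU_nn: "0 \<le> PU i u"
  unfolding PU_def by (intro sum_nonneg mult_nonneg_nonneg cw_nn ps_nn) auto

lemma PU_sum: "(\<Sum>u\<in>UNIV. PU i u) = 1"
proof -
  have "\<And>g :: 's list \<Rightarrow> 'x. (\<Sum>u\<in>UNIV. \<Sum>a\<in>lists_n i. ps_n PS a * (if (\<lambda>s. g (a @ [s])) = u then 1 else 0)) = 1"
    by (subst sum.swap) (simp add: sum_ps sum_ind)
  hence "(\<Sum>u\<in>UNIV. PU i u) = (\<Sum>m<M. \<Sum>k<K. \<Sum>e\<in>E. cw e)"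
    unfolding PU_def
    by (subst sum3_swap[symmetric]) (simp add: sum_distrib_left[symmetric])
  thus ?thesis by (simp only: sum_cw)
qed

lemma mix_marg:
  assumes "i < n"
  shows "Jsum (\<lambda>m k e ss ys zs. J e m k ss ys zs * f (\<lambda>s. e m k (take i ss @ [s])) (ss ! i) (ys ! i) (zs ! i))
       = (\<Sum>u\<in>UNIV. PU i u * (\<Sum>s\<in>UNIV. \<Sum>y\<in>UNIV. \<Sum>z\<in>UNIV. PS s * W s (u s) y z * f u s y z))"
proof -
  define G where "G u = (\<Sum>s\<in>UNIV. \<Sum>y\<in>UNIV. \<Sum>z\<in>UNIV. PS s * W s (u s) y z * f u s y z)" for u
  have distr: "\<And>c A. c * (\<Sum>u\<in>UNIV. A u * G u) = (\<Sum>u\<in>UNIV. (c * A u) * G u)"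
    by (simp add: sum_distrib_left mult.assoc)
  have inner: "(\<Sum>ss\<in>lists_n n. \<Sum>ys\<in>lists_n n. \<Sum>zs\<in>lists_n n. J e m k ss ys zs * f (\<lambda>s. e m k (take i ss @ [s])) (ss ! i) (ys ! i) (zs ! i))
      = (\<Sum>u\<in>UNIV. (cw e * (\<Sum>a\<in>lists_n i. ps_n PS a * (if (\<lambda>s. e m k (a @ [s])) = u then 1 else 0))) * G u)" for m k e
  proof -
    have "(\<Sum>ss\<in>lists_n n. \<Sum>ys\<in>lists_n n. \<Sum>zs\<in>lists_n n. J e m k ss ys zs * f (\<lambda>s. e m k (take i ss @ [s])) (ss ! i) (ys ! i) (zs ! i))
        = cw e * (\<Sum>ss\<in>lists_n n. \<Sum>ys\<in>lists_n n. \<Sum>zs\<in>lists_n n. ps_n PS ss * ch_n W ss (xseq e m k ss) ys zs * f (\<lambda>s. e m k (take i ss @ [s])) (ss ! i) (ys ! i) (zs ! i))"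
      by (simp add: J_cw sum_distrib_left mult.assoc)
    also have "\<dots> = cw e * (\<Sum>a\<in>lists_n i. ps_n PS a * G (\<lambda>s. e m k (a @ [s])))"
      using marg[OF assms, of e m k "\<lambda>a s y z. f (\<lambda>s. e m k (a @ [s])) s y z"] by (simp add: G_def)
    also have "\<dots> = cw e * (\<Sum>u\<in>UNIV. (\<Sum>a\<in>lists_n i. ps_n PS a * (if (\<lambda>s. e m k (a @ [s])) = u then 1 else 0)) * G u)"
      using sum_regroup[where A="lists_n i" and h="\<lambda>a. ps_n PS a" and G=G and \<phi>="\<lambda>a s. e m k (a @ [s])"] by simp
    also have "\<dots> = (\<Sum>u\<in>UNIV. (cw e * (\<Sum>a\<in>lists_n i. ps_n PS a * (if (\<lambda>s. e m k (a @ [s])) = u then 1 else 0))) * G u)"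
      by (rule distr)
    finally show ?thesis .
  qed
  have "Jsum (\<lambda>m k e ss ys zs. J e m k ss ys zs * f (\<lambda>s. e m k (take i ss @ [s])) (ss ! i) (ys ! i) (zs ! i))
      = (\<Sum>m<M. \<Sum>k<K. \<Sum>e\<in>E. \<Sum>u\<in>UNIV. (cw e * (\<Sum>a\<in>lists_n i. ps_n PS a * (if (\<lambda>s. e m k (a @ [s])) = u then 1 else 0))) * G u)"
    unfolding Jsum_def inner by simp
  also have "\<dots> = (\<Sum>u\<in>UNIV. \<Sum>m<M. \<Sum>k<K. \<Sum>e\<in>E. (cw e * (\<Sum>a\<in>lists_n i. ps_n PS a * (if (\<lambda>s. e m k (a @ [s])) = u then 1 else 0))) * G u)"
    by (rule sum3_swap)
  also have "\<dots> = (\<Sum>u\<in>UNIV. PU i u * G u)"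
    unfolding PU_def by (simp add: sum_distrib_right)
  finally show ?thesis by (simp add: G_def)
qed

lemma Jsum_one: "Jsum (\<lambda>m k e ss ys zs. J e m k ss ys zs) = 1"
proof -
  have "Jsum (\<lambda>m k e ss ys zs. J e m k ss ys zs * (\<lambda>u s y z. 1) (\<lambda>s. e m k (take 0 ss @ [s])) (ss ! 0) (ys ! 0) (zs ! 0))
        = (\<Sum>u\<in>UNIV. PU 0 u * (\<Sum>s\<in>UNIV. \<Sum>y\<in>UNIV. \<Sum>z\<in>UNIV. PS s * W s (u s) y z * 1))"
    by (rule mix_marg[OF n_pos])
  also have "\<dots> = (\<Sum>u\<in>UNIV. PU 0 u)"
    by (simp add: sum_distrib_left[symmetric] mult.assoc W_sum PS_sum)
  finally show ?thesis by (simp add: PU_sum)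
qed

definition pbar :: "('s \<Rightarrow> 'x) \<Rightarrow> real" where
  "pbar u = (\<Sum>i<n. PU i u) / real n"

lemma pbar_nn: "0 \<le> pbar u" unfolding pbar_def by (intro divide_nonneg_nonneg sum_nonneg PU_nn) auto

lemma pbar_sum: "(\<Sum>u\<in>UNIV. pbar u) = 1"
proof -
  have "(\<Sum>u\<in>UNIV. \<Sum>i<n. PU i u) = (\<Sum>i<n. \<Sum>u\<in>UNIV. PU i u)" by (rule sum.swap)
  thus ?thesis unfolding pbar_def using n_pos by (simp add: sum_divide_distrib[symmetric] PU_sum)
qed

lemma Jsum_avg:
  assumes "\<And>i. i < n \<Longrightarrow> Jsum (\<lambda>m k e ss ys zs. J e m k ss ys zs * f (\<lambda>s. e m k (take i ss @ [s])) (ss ! i) (ys ! i) (zs ! i))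
       = (\<Sum>u\<in>UNIV. PU i u * G u)"
  shows "Jsum (\<lambda>m k e ss ys zs. J e m k ss ys zs * (\<Sum>i<n. f (\<lambda>s. e m k (take i ss @ [s])) (ss ! i) (ys ! i) (zs ! i)))
      = real n * (\<Sum>u\<in>UNIV. pbar u * G u)"
proof -
  have "Jsum (\<lambda>m k e ss ys zs. J e m k ss ys zs * (\<Sum>i<n. f (\<lambda>s. e m k (take i ss @ [s])) (ss ! i) (ys ! i) (zs ! i)))
      = (\<Sum>i<n. Jsum (\<lambda>m k e ss ys zs. J e m k ss ys zs * f (\<lambda>s. e m k (take i ss @ [s])) (ss ! i) (ys ! i) (zs ! i)))"
    by (simp add: sum_distrib_left Jsum_sum)
  also have "\<dots> = (\<Sum>i<n. \<Sum>u\<in>UNIV. PU i u * G u)" by (simp add: assms)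
  also have "\<dots> = (\<Sum>u\<in>UNIV. \<Sum>i<n. PU i u * G u)" by (rule sum.swap)
  also have "\<dots> = real n * (\<Sum>u\<in>UNIV. pbar u * G u)"
  proof -
    have "\<And>u. real n * (pbar u * G u) = (\<Sum>i<n. PU i u * G u)"
      using n_pos by (simp add: pbar_def sum_distrib_right)
    thus ?thesis by (simp add: sum_distrib_left)
  qed
  finally show ?thesis .
qed

lemma exp_cost_eq:
  "exp_cost PS W b n M K E w = (\<Sum>u\<in>UNIV. pbar u * (\<Sum>s\<in>UNIV. PS s * b (u s)))"
proof -
  have "exp_cost PS W b n M K E w = Jsum (\<lambda>m k e ss ys zs. J e m k ss ys zs * ((\<Sum>i<n. b (xseq e m k ss ! i)) / real n))"
    unfolding exp_cost_def Jsum_def J_def by simp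
  also have "\<dots> = Jsum (\<lambda>m k e ss ys zs. (1 / real n) * (J e m k ss ys zs * (\<Sum>i<n. b (xseq e m k ss ! i))))"
    by (intro Jsum_cong) simp
  also have "\<dots> = Jsum (\<lambda>m k e ss ys zs. J e m k ss ys zs * (\<Sum>i<n. b (xseq e m k ss ! i))) / real n"
    using Jsum_cmult[of "1 / real n" "\<lambda>m k e ss ys zs. J e m k ss ys zs * (\<Sum>i<n. b (xseq e m k ss ! i))"] by simp
  also have "Jsum (\<lambda>m k e ss ys zs. J e m k ss ys zs * (\<Sum>i<n. b (xseq e m k ss ! i)))
      = Jsum (\<lambda>m k e ss ys zs. J e m k ss ys zs * (\<Sum>i<n. (\<lambda>u s y z. b (u s)) (\<lambda>s. e m k (take i ss @ [s])) (ss ! i) (ys ! i) (zs ! i)))"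
    by (intro Jsum_cong arg_cong2[where f="(*)"] refl sum.cong) (auto simp: lists_n_def nth_xseq)
  also have "\<dots> = real n * (\<Sum>u\<in>UNIV. pbar u * (\<Sum>s\<in>UNIV. PS s * b (u s)))"
  proof (rule Jsum_avg)
    fix i assume "i < n"
    from mix_marg[OF this, of "\<lambda>u s y z. b (u s)"] W_out[of _ "\<lambda>s. b (_ s)"]
    show "Jsum (\<lambda>m k e ss ys zs. J e m k ss ys zs * (\<lambda>u s y z. b (u s)) (\<lambda>s. e m k (take i ss @ [s])) (ss ! i) (ys ! i) (zs ! i))
       = (\<Sum>u\<in>UNIV. PU i u * (\<Sum>s\<in>UNIV. PS s * b (u s)))"
      by simp
  qed
  finally show ?thesis using n_pos by simp
qed

end


context chan begin
definition qY :: "(('s \<Rightarrow> 'x) \<Rightarrow> real) \<Rightarrow> 'y \<Rightarrow> real" where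
  "qY p y = (\<Sum>u\<in>UNIV. p u * TY u y)"
definition Iobj :: "(('s \<Rightarrow> 'x) \<Rightarrow> real) \<Rightarrow> real" where
  "Iobj p = (\<Sum>u\<in>UNIV. p u * (\<Sum>y\<in>UNIV. TY u y * ln (TY u y))) - (\<Sum>y\<in>UNIV. qY p y * ln (qY p y))"

lemma qY_sum: "(\<Sum>u\<in>UNIV. p u) = 1 \<Longrightarrow> (\<Sum>y\<in>UNIV. qY p y) = 1"
  unfolding qY_def by (subst sum.swap) (simp add: sum_distrib_left[symmetric] TY_sum)

lemma TY_f: "(\<Sum>s\<in>UNIV. \<Sum>y\<in>UNIV. \<Sum>z\<in>UNIV. PS s * W s (u s) y z * h y) = (\<Sum>y\<in>UNIV. TY u y * h y)"
proof -
  have "(\<Sum>s\<in>UNIV. \<Sum>y\<in>UNIV. \<Sum>z\<in>UNIV. PS s * W s (u s) y z * h y) = (\<Sum>s\<in>UNIV. \<Sum>y\<in>UNIV. PS s * WY s (u s) y * h y)"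
    by (simp add: WY_def sum_distrib_left sum_distrib_right mult_ac)
  also have "\<dots> = (\<Sum>y\<in>UNIV. TY u y * h y)"
    by (subst sum.swap) (simp add: TY_def sum_distrib_right)
  finally show ?thesis .
qed

lemma TY_eq: "TY u y = (\<Sum>s\<in>UNIV. \<Sum>y'\<in>UNIV. \<Sum>z\<in>UNIV. PS s * W s (u s) y' z * (if y' = y then 1 else 0))"
proof -
  have "(\<Sum>y'\<in>UNIV. TY u y' * (if y' = y then 1 else 0)) = (\<Sum>y'\<in>UNIV. if y' = y then TY u y else 0)"
    by (rule sum.cong) auto
  thus ?thesis by (simp add: TY_f)
qed

lemma TY_pos: "0 < PS s \<Longrightarrow> 0 < W s (u s) y z \<Longrightarrow> 0 < TY u y"
proof -
  assume a: "0 < PS s" "0 < W s (u s) y z"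
  have "W s (u s) y z \<le> WY s (u s) y" unfolding WY_def
    by (rule member_le_sum) (auto simp: W_nn)
  hence "0 < PS s * WY s (u s) y" using a by (intro mult_pos_pos) auto
  also have "PS s * WY s (u s) y \<le> TY u y" unfolding TY_def
    by (rule member_le_sum[of s UNIV "\<lambda>s. PS s * WY s (u s) y"]) (auto intro: mult_nonneg_nonneg PS_nn WY_nn)
  finally show ?thesis .
qed

end

context code begin

lemma Jsum_diff: "Jsum (\<lambda>m k e ss ys zs. F m k e ss ys zs - G m k e ss ys zs) = Jsum F - Jsum G"
  unfolding Jsum_def by (simp add: sum_subtractf)

lemma Jsum_ge_term:
  assumes "\<And>m k e ss ys zs. m < M \<Longrightarrow> k < K \<Longrightarrow> e \<in> E \<Longrightarrow> ss \<in> lists_n n \<Longrightarrow> ys \<in> lists_n n \<Longrightarrow> zs \<in> lists_n n \<Longrightarrow> 0 \<le> F m k e ss ys zs"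
    and "m < M" "k < K" "e \<in> E" "ss \<in> lists_n n" "ys \<in> lists_n n" "zs \<in> lists_n n"
  shows "F m k e ss ys zs \<le> Jsum F"
proof -
  have "F m k e ss ys zs \<le> (\<Sum>zs\<in>lists_n n. F m k e ss ys zs)"
    by (rule member_le_sum) (use assms in auto)
  also have "\<dots> \<le> (\<Sum>ys\<in>lists_n n. \<Sum>zs\<in>lists_n n. F m k e ss ys zs)"
    by (rule member_le_sum[of ys _ "\<lambda>ys. \<Sum>zs\<in>lists_n n. F m k e ss ys zs"]) (use assms in \<open>auto intro!: sum_nonneg\<close>)
  also have "\<dots> \<le> (\<Sum>ss\<in>lists_n n. \<Sum>ys\<in>lists_n n. \<Sum>zs\<in>lists_n n. F m k e ss ys zs)"
    by (rule member_le_sum[of ss _ "\<lambda>ss. \<Sum>ys\<in>lists_n n. \<Sum>zs\<in>lists_n n. F m k e ss ys zs"]) (use assms in \<open>auto intro!: sum_nonneg\<close>)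
  also have "\<dots> \<le> (\<Sum>e\<in>E. \<Sum>ss\<in>lists_n n. \<Sum>ys\<in>lists_n n. \<Sum>zs\<in>lists_n n. F m k e ss ys zs)"
    by (rule member_le_sum[of e _ "\<lambda>e. \<Sum>ss\<in>lists_n n. \<Sum>ys\<in>lists_n n. \<Sum>zs\<in>lists_n n. F m k e ss ys zs"]) (use assms finE in \<open>auto intro!: sum_nonneg\<close>)
  also have "\<dots> \<le> (\<Sum>k<K. \<Sum>e\<in>E. \<Sum>ss\<in>lists_n n. \<Sum>ys\<in>lists_n n. \<Sum>zs\<in>lists_n n. F m k e ss ys zs)"
    by (rule member_le_sum[of k _ "\<lambda>k. \<Sum>e\<in>E. \<Sum>ss\<in>lists_n n. \<Sum>ys\<in>lists_n n. \<Sum>zs\<in>lists_n n. F m k e ss ys zs"]) (use assms finE in \<open>auto intro!: sum_nonneg\<close>)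
  also have "\<dots> \<le> Jsum F" unfolding Jsum_def
    by (rule member_le_sum[of m _ "\<lambda>m. \<Sum>k<K. \<Sum>e\<in>E. \<Sum>ss\<in>lists_n n. \<Sum>ys\<in>lists_n n. \<Sum>zs\<in>lists_n n. F m k e ss ys zs"]) (use assms finE in \<open>auto intro!: sum_nonneg\<close>)
  finally show ?thesis .
qed

definition q where "q = qY pbar"

lemma q_sum: "(\<Sum>y\<in>UNIV. q y) = 1" unfolding q_def by (rule qY_sum[OF pbar_sum])

lemma q_nn: "0 \<le> q y" unfolding q_def qY_def by (intro sum_nonneg mult_nonneg_nonneg pbar_nn TY_nn)

lemma PU_TY_ge: assumes "j < n" shows "(\<Sum>u\<in>UNIV. PU j u * TY u y) \<le> real n * q y"
proof -
  have "(\<Sum>u\<in>UNIV. PU j u * TY u y) \<le> (\<Sum>u\<in>UNIV. (\<Sum>i<n. PU i u) * TY u y)"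
    using assms by (intro sum_mono mult_right_mono TY_nn member_le_sum PU_nn) auto
  moreover have "(\<Sum>u\<in>UNIV. (\<Sum>i<n. PU i u) * TY u y) = real n * q y"
    using n_pos by (simp add: q_def qY_def pbar_def sum_distrib_left)
  ultimately show ?thesis by simp
qed

definition uj where "uj e m k ss j = (\<lambda>s. e m k (take j ss @ [s]))"

lemma J_pos_facts:
  assumes J: "0 < J e m k ss ys zs" and mem: "m < M" "k < K" "e \<in> E" "ss \<in> lists_n n" "ys \<in> lists_n n" "zs \<in> lists_n n"
    and j: "j < n"
  shows "0 < TY (uj e m k ss j) (ys ! j)" "0 < q (ys ! j)"
proof -
  have l: "length ss = n" using mem by (simp add: lists_n_def)
  have "ps_n PS ss \<noteq> 0" "ch_n W ss (xseq e m k ss) ys zs \<noteq> 0" using J by (auto simp: J_cw)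
  hence "PS (ss ! j) \<noteq> 0" "W (ss ! j) (xseq e m k ss ! j) (ys ! j) (zs ! j) \<noteq> 0"
    using j l by (auto simp: ps_n_def ch_n_def prod_zero_iff)
  hence "0 < PS (ss ! j)" "0 < W (ss ! j) (uj e m k ss j (ss ! j)) (ys ! j) (zs ! j)"
    using PS_nn[of "ss ! j"] W_nn j l by (auto simp: nth_xseq uj_def order_le_neq_trans)
  thus "0 < TY (uj e m k ss j) (ys ! j)" by (rule TY_pos)
  have "Jsum (\<lambda>m k e ss ys' zs. J e m k ss ys' zs * (\<lambda>u s y' z. if y' = ys ! j then 1 else 0) (\<lambda>s. e m k (take j ss @ [s])) (ss ! j) (ys' ! j) (zs ! j))
      = (\<Sum>u\<in>UNIV. PU j u * (\<Sum>s\<in>UNIV. \<Sum>y'\<in>UNIV. \<Sum>z\<in>UNIV. PS s * W s (u s) y' z * (if y' = ys ! j then 1 else 0)))"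
    by (rule mix_marg[OF j])
  also have "\<dots> = (\<Sum>u\<in>UNIV. PU j u * TY u (ys ! j))" by (simp add: TY_eq)
  also have "\<dots> \<le> real n * q (ys ! j)" by (rule PU_TY_ge[OF j])
  finally have le: "Jsum (\<lambda>m k e ss ys' zs. J e m k ss ys' zs * (if ys' ! j = ys ! j then 1 else 0)) \<le> real n * q (ys ! j)"
    by simp
  have "J e m k ss ys zs * (if ys ! j = ys ! j then 1 else 0) \<le> Jsum (\<lambda>m k e ss ys' zs. J e m k ss ys' zs * (if ys' ! j = ys ! j then 1 else 0))"
    by (rule Jsum_ge_term[where F="\<lambda>m k e ss ys' zs. J e m k ss ys' zs * (if ys' ! j = ys ! j then 1 else 0)"])
       (use mem in \<open>auto intro: J_nn\<close>)
  hence "0 < real n * q (ys ! j)" using J le by simp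
  thus "0 < q (ys ! j)" using n_pos by (simp add: zero_less_mult_iff)
qed

definition Qd where
  "Qd dec m k ys = (if dec k ys < M then (if m = dec k ys then 1/2 else 1 / (2 * (real M - 1))) else 1 / real M)"

lemma Qd_pos: "m < M \<Longrightarrow> 0 < Qd dec m k ys"
  unfolding Qd_def by (auto simp: of_nat_less_iff[symmetric])

lemma Qd_ln: "m < M \<Longrightarrow> - ln 2 - (if dec k ys \<noteq> m then ln (real M) else 0) \<le> ln (Qd dec m k ys)"
proof -
  assume m: "m < M"
  show ?thesis
  proof (cases "dec k ys < M")
    case True
    show ?thesis
    proof (cases "m = dec k ys")
      case True thus ?thesis using \<open>dec k ys < M\<close> by (simp add: Qd_def ln_div)
    next
      case False
      hence M2: "2 \<le> M" using m True by linarith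
      hence pos: "0 < real M - 1" by simp
      have "ln (2 * (real M - 1)) = ln 2 + ln (real M - 1)"
        by (subst ln_mult) (use pos in simp)
      moreover have "ln (1 / (2 * (real M - 1))) = - ln (2 * (real M - 1))"
        by (subst ln_div) (use pos in simp)
      ultimately have "ln (1 / (2 * (real M - 1))) = - ln 2 - ln (real M - 1)" by simp
      moreover have "ln (real M - 1) \<le> ln (real M)" using M2 by simp
      ultimately show ?thesis using True False by (simp add: Qd_def)
    qed
  next
    case False
    hence "dec k ys \<noteq> m" using m by auto
    thus ?thesis using False M_pos by (simp add: Qd_def ln_div)
  qed
qed

lemma Qd_sum: "(\<Sum>m<M. Qd dec m k ys) \<le> 1"
proof (cases "dec k ys < M")
  case True
  have "(\<Sum>m<M. Qd dec m k ys) = Qd dec (dec k ys) k ys + (\<Sum>m\<in>{..<M} - {dec k ys}. Qd dec m k ys)"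
    using True by (simp add: sum.remove)
  also have "(\<Sum>m\<in>{..<M} - {dec k ys}. Qd dec m k ys) = (real M - 1) * (1 / (2 * (real M - 1)))"
    using True by (simp add: Qd_def)
  also have "\<dots> \<le> 1/2"
  proof -
    have "\<And>x::real. x * (1 / (2 * x)) \<le> 1/2" by (case_tac "x = 0") (simp_all add: field_simps)
    thus ?thesis by blast
  qed
  finally show ?thesis using True by (simp add: Qd_def)
next
  case False
  thus ?thesis using M_pos by (simp add: Qd_def)
qed

definition Xv where
  "Xv dec e m k ss ys = real M * Qd dec m k ys * (\<Prod>j<n. q (ys ! j)) / (\<Prod>j<n. TY (uj e m k ss j) (ys ! j))"

end


context code begin

lemma sum_ch_z:
  assumes "ss \<in> lists_n n"
  shows "(\<Sum>zs\<in>lists_n n. ch_n W ss xs ys zs) = (\<Prod>j<n. WY (ss ! j) (xs ! j) (ys ! j))"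
proof -
  have l: "length ss = n" using assms by (simp add: lists_n_def)
  show ?thesis unfolding ch_n_def l WY_def
    by (rule sum_prod_lists_n[where F="\<lambda>j z. W (ss ! j) (xs ! j) (ys ! j) z"])
qed

lemma inner_X:
  assumes e: "e \<in> E" and m: "m < M" and ys: "ys \<in> lists_n n"
  shows "(\<Sum>ss\<in>lists_n n. \<Sum>zs\<in>lists_n n. ps_n PS ss * ch_n W ss (xseq e m k ss) ys zs * Xv dec e m k ss ys)
     \<le> real M * Qd dec m k ys * (\<Prod>j<n. q (ys ! j))"
proof -
  define A where "A = real M * Qd dec m k ys * (\<Prod>j<n. q (ys ! j))"
  have A_nn: "0 \<le> A" unfolding A_def using Qd_pos[OF m, of dec k ys]
    by (intro mult_nonneg_nonneg prod_nonneg q_nn) auto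
  have "(\<Sum>ss\<in>lists_n n. \<Sum>zs\<in>lists_n n. ps_n PS ss * ch_n W ss (xseq e m k ss) ys zs * Xv dec e m k ss ys)
      = (\<Sum>ss\<in>lists_n n. A * (\<Prod>j<n. rho (\<lambda>s. e m k (take j ss @ [s])) (ss ! j) (ys ! j)))"
  proof (intro sum.cong refl)
    fix ss :: "'s list" assume ss: "ss \<in> lists_n n"
    hence l: "length ss = n" by (simp add: lists_n_def)
    have "(\<Sum>zs\<in>lists_n n. ps_n PS ss * ch_n W ss (xseq e m k ss) ys zs * Xv dec e m k ss ys)
        = ps_n PS ss * (\<Prod>j<n. WY (ss ! j) (xseq e m k ss ! j) (ys ! j)) * Xv dec e m k ss ys"
      by (simp add: sum_distrib_left[symmetric] sum_distrib_right[symmetric] sum_ch_z[OF ss])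
    also have "(\<Prod>j<n. WY (ss ! j) (xseq e m k ss ! j) (ys ! j)) = (\<Prod>j<n. WY (ss ! j) (uj e m k ss j (ss ! j)) (ys ! j))"
      by (intro prod.cong refl) (simp add: l nth_xseq uj_def)
    also have "ps_n PS ss * (\<Prod>j<n. WY (ss ! j) (uj e m k ss j (ss ! j)) (ys ! j)) * Xv dec e m k ss ys
        = A * ((\<Prod>j<n. PS (ss ! j)) * (\<Prod>j<n. WY (ss ! j) (uj e m k ss j (ss ! j)) (ys ! j)) / (\<Prod>j<n. TY (uj e m k ss j) (ys ! j)))"
      by (simp add: Xv_def A_def ps_n_lists[OF ss])
    also have "\<dots> = A * (\<Prod>j<n. rho (\<lambda>s. e m k (take j ss @ [s])) (ss ! j) (ys ! j))"
      by (simp add: rho_def prod_dividef prod.distrib uj_def)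
    finally show "(\<Sum>zs\<in>lists_n n. ps_n PS ss * ch_n W ss (xseq e m k ss) ys zs * Xv dec e m k ss ys)
        = A * (\<Prod>j<n. rho (\<lambda>s. e m k (take j ss @ [s])) (ss ! j) (ys ! j))" .
  qed
  also have "\<dots> = A * (\<Sum>ss\<in>lists_n n. \<Prod>j<n. rho (\<lambda>s. e m k (take j ss @ [s])) (ss ! j) (ys ! j))"
    by (simp add: sum_distrib_left)
  also have "\<dots> \<le> A * 1" by (intro mult_left_mono seq_rho A_nn)
  finally show ?thesis by (simp add: A_def)
qed

lemma Jsum_X: "Jsum (\<lambda>m k e ss ys zs. J e m k ss ys zs * Xv dec e m k ss ys) \<le> 1"
proof -
  have "Jsum (\<lambda>m k e ss ys zs. J e m k ss ys zs * Xv dec e m k ss ys)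
      = (\<Sum>m<M. \<Sum>k<K. \<Sum>e\<in>E. cw e * (\<Sum>ys\<in>lists_n n. \<Sum>ss\<in>lists_n n. \<Sum>zs\<in>lists_n n.
           ps_n PS ss * ch_n W ss (xseq e m k ss) ys zs * Xv dec e m k ss ys))"
    unfolding Jsum_def J_cw
  proof (intro sum.cong refl)
    fix m k e
    have "(\<Sum>ss\<in>lists_n n. \<Sum>ys\<in>lists_n n. \<Sum>zs\<in>lists_n n. cw e * (ps_n PS ss * ch_n W ss (xseq e m k ss) ys zs) * Xv dec e m k ss ys)
        = cw e * (\<Sum>ss\<in>lists_n n. \<Sum>ys\<in>lists_n n. \<Sum>zs\<in>lists_n n. ps_n PS ss * ch_n W ss (xseq e m k ss) ys zs * Xv dec e m k ss ys)"
      by (simp add: sum_distrib_left mult.assoc)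
    also have "(\<Sum>ss\<in>lists_n n. \<Sum>ys\<in>lists_n n. \<Sum>zs\<in>lists_n n. ps_n PS ss * ch_n W ss (xseq e m k ss) ys zs * Xv dec e m k ss ys)
        = (\<Sum>ys\<in>lists_n n. \<Sum>ss\<in>lists_n n. \<Sum>zs\<in>lists_n n. ps_n PS ss * ch_n W ss (xseq e m k ss) ys zs * Xv dec e m k ss ys)"
      by (rule sum.swap)
    finally show "(\<Sum>ss\<in>lists_n n. \<Sum>ys\<in>lists_n n. \<Sum>zs\<in>lists_n n. cw e * (ps_n PS ss * ch_n W ss (xseq e m k ss) ys zs) * Xv dec e m k ss ys)
        = cw e * (\<Sum>ys\<in>lists_n n. \<Sum>ss\<in>lists_n n. \<Sum>zs\<in>lists_n n. ps_n PS ss * ch_n W ss (xseq e m k ss) ys zs * Xv dec e m k ss ys)" .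
  qed
  also have "\<dots> \<le> (\<Sum>m<M. \<Sum>k<K. \<Sum>e\<in>E. cw e * (\<Sum>ys\<in>lists_n n. real M * Qd dec m k ys * (\<Prod>j<n. q (ys ! j))))"
    by (intro sum_mono mult_left_mono inner_X cw_nn) auto
  also have "\<dots> = (\<Sum>k<K. \<Sum>e\<in>E. cw e * real M * (\<Sum>ys\<in>lists_n n. (\<Sum>m<M. Qd dec m k ys) * (\<Prod>j<n. q (ys ! j))))"
  proof -
    have "(\<Sum>m<M. \<Sum>k<K. \<Sum>e\<in>E. cw e * (\<Sum>ys\<in>lists_n n. real M * Qd dec m k ys * (\<Prod>j<n. q (ys ! j))))
        = (\<Sum>k<K. \<Sum>m<M. \<Sum>e\<in>E. cw e * (\<Sum>ys\<in>lists_n n. real M * Qd dec m k ys * (\<Prod>j<n. q (ys ! j))))"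
      by (rule sum.swap)
    also have "\<dots> = (\<Sum>k<K. \<Sum>e\<in>E. \<Sum>m<M. cw e * (\<Sum>ys\<in>lists_n n. real M * Qd dec m k ys * (\<Prod>j<n. q (ys ! j))))"
      by (intro sum.cong refl) (rule sum.swap)
    also have "\<dots> = (\<Sum>k<K. \<Sum>e\<in>E. cw e * real M * (\<Sum>ys\<in>lists_n n. (\<Sum>m<M. Qd dec m k ys) * (\<Prod>j<n. q (ys ! j))))"
    proof (intro sum.cong refl)
      fix k e
      have "(\<Sum>m<M. cw e * (\<Sum>ys\<in>lists_n n. real M * Qd dec m k ys * (\<Prod>j<n. q (ys ! j))))
          = cw e * real M * (\<Sum>m<M. \<Sum>ys\<in>lists_n n. Qd dec m k ys * (\<Prod>j<n. q (ys ! j)))"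
        by (simp add: sum_distrib_left mult_ac)
      also have "(\<Sum>m<M. \<Sum>ys\<in>lists_n n. Qd dec m k ys * (\<Prod>j<n. q (ys ! j)))
          = (\<Sum>ys\<in>lists_n n. \<Sum>m<M. Qd dec m k ys * (\<Prod>j<n. q (ys ! j)))" by (rule sum.swap)
      finally show "(\<Sum>m<M. cw e * (\<Sum>ys\<in>lists_n n. real M * Qd dec m k ys * (\<Prod>j<n. q (ys ! j))))
          = cw e * real M * (\<Sum>ys\<in>lists_n n. (\<Sum>m<M. Qd dec m k ys) * (\<Prod>j<n. q (ys ! j)))"
        by (simp add: sum_distrib_right)
    qed
    finally show ?thesis .
  qed
  also have "\<dots> \<le> (\<Sum>k<K. \<Sum>e\<in>E. cw e * real M * (\<Sum>ys\<in>lists_n n. 1 * (\<Prod>j<n. q (ys ! j))))"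
    by (intro sum_mono mult_left_mono mult_right_mono Qd_sum prod_nonneg q_nn mult_nonneg_nonneg cw_nn sum_nonneg) auto
  also have "\<dots> = (\<Sum>k<K. \<Sum>e\<in>E. cw e * real M)"
    using sum_prod_lists_n[of "\<lambda>j. q" n] by (simp add: q_sum)
  also have "\<dots> = 1"
  proof -
    have "(\<Sum>e\<in>E. cw e * real M) = 1 / real K"
      unfolding cw_def using M_pos by (simp add: sum_divide_distrib[symmetric] w_sum)
    thus ?thesis using K_pos by simp
  qed
  finally show ?thesis .
qed


lemma Jsum_J_const: "Jsum (\<lambda>m k e ss ys zs. J e m k ss ys zs * c) = c"
  using Jsum_cmult[of c "\<lambda>m k e ss ys zs. J e m k ss ys zs"] Jsum_one by (simp add: mult.commute)

lemma err_Jsum: "err_prob PS W n M K E w dec = Jsum (\<lambda>m k e ss ys zs. J e m k ss ys zs * (if dec k ys \<noteq> m then 1 else 0))"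
  unfolding err_prob_def Jsum_def J_def by simp

lemma avg_ln_q: "Jsum (\<lambda>m k e ss ys zs. J e m k ss ys zs * (\<Sum>i<n. ln (q (ys ! i))))
   = real n * (\<Sum>y\<in>UNIV. q y * ln (q y))"
proof -
  have "Jsum (\<lambda>m k e ss ys zs. J e m k ss ys zs * (\<Sum>i<n. (\<lambda>u s y z. ln (q y)) (\<lambda>s. e m k (take i ss @ [s])) (ss ! i) (ys ! i) (zs ! i)))
      = real n * (\<Sum>u\<in>UNIV. pbar u * (\<Sum>y\<in>UNIV. TY u y * ln (q y)))"
  proof (rule Jsum_avg)
    fix i assume "i < n"
    from mix_marg[OF this, of "\<lambda>u s y z. ln (q y)"]
    show "Jsum (\<lambda>m k e ss ys zs. J e m k ss ys zs * (\<lambda>u s y z. ln (q y)) (\<lambda>s. e m k (take i ss @ [s])) (ss ! i) (ys ! i) (zs ! i))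
        = (\<Sum>u\<in>UNIV. PU i u * (\<Sum>y\<in>UNIV. TY u y * ln (q y)))"
      by (simp add: TY_f)
  qed
  also have "(\<Sum>u\<in>UNIV. pbar u * (\<Sum>y\<in>UNIV. TY u y * ln (q y))) = (\<Sum>y\<in>UNIV. q y * ln (q y))"
  proof -
    have "(\<Sum>u\<in>UNIV. pbar u * (\<Sum>y\<in>UNIV. TY u y * ln (q y))) = (\<Sum>u\<in>UNIV. \<Sum>y\<in>UNIV. pbar u * TY u y * ln (q y))"
      by (simp add: sum_distrib_left mult.assoc)
    also have "\<dots> = (\<Sum>y\<in>UNIV. \<Sum>u\<in>UNIV. pbar u * TY u y * ln (q y))" by (rule sum.swap)
    also have "\<dots> = (\<Sum>y\<in>UNIV. q y * ln (q y))" by (simp add: sum_distrib_right q_def qY_def)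
    finally show ?thesis .
  qed
  finally show ?thesis by simp
qed

lemma avg_ln_TY: "Jsum (\<lambda>m k e ss ys zs. J e m k ss ys zs * (\<Sum>i<n. ln (TY (uj e m k ss i) (ys ! i))))
   = real n * (\<Sum>u\<in>UNIV. pbar u * (\<Sum>y\<in>UNIV. TY u y * ln (TY u y)))"
proof -
  have "Jsum (\<lambda>m k e ss ys zs. J e m k ss ys zs * (\<Sum>i<n. (\<lambda>u s y z. ln (TY u y)) (\<lambda>s. e m k (take i ss @ [s])) (ss ! i) (ys ! i) (zs ! i)))
      = real n * (\<Sum>u\<in>UNIV. pbar u * (\<Sum>y\<in>UNIV. TY u y * ln (TY u y)))"
  proof (rule Jsum_avg)
    fix i assume "i < n"
    from mix_marg[OF this, of "\<lambda>u s y z. ln (TY u y)"]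
    show "Jsum (\<lambda>m k e ss ys zs. J e m k ss ys zs * (\<lambda>u s y z. ln (TY u y)) (\<lambda>s. e m k (take i ss @ [s])) (ss ! i) (ys ! i) (zs ! i))
        = (\<Sum>u\<in>UNIV. PU i u * (\<Sum>y\<in>UNIV. TY u y * ln (TY u y)))"
      by (simp add: TY_f[of _ "\<lambda>y. ln (TY _ y)"])
  qed
  thus ?thesis by (simp add: uj_def)
qed

lemma rate_bound:
  "ln (real M) - ln 2 - err_prob PS W n M K E w dec * ln (real M) \<le> real n * Iobj pbar"
proof -
  define LX where "LX m k e ss ys zs = J e m k ss ys zs * (ln (real M) + ln (Qd dec m k ys)
     + (\<Sum>i<n. ln (q (ys ! i))) - (\<Sum>i<n. ln (TY (uj e m k ss i) (ys ! i))))" for m k e ss ys zs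
  have key: "LX m k e ss ys zs \<le> J e m k ss ys zs * Xv dec e m k ss ys - J e m k ss ys zs"
    if mem: "m < M" "k < K" "e \<in> E" "ss \<in> lists_n n" "ys \<in> lists_n n" "zs \<in> lists_n n" for m k e ss ys zs
  proof (cases "J e m k ss ys zs = 0")
    case True thus ?thesis by (simp add: LX_def)
  next
    case False
    hence Jp: "0 < J e m k ss ys zs" using J_nn[OF mem(3)] by (simp add: order_le_neq_trans)
    have TYp: "\<And>i. i < n \<Longrightarrow> 0 < TY (uj e m k ss i) (ys ! i)" and qp: "\<And>i. i < n \<Longrightarrow> 0 < q (ys ! i)"
      using J_pos_facts[OF Jp mem] by auto
    have Qp: "0 < Qd dec m k ys" by (rule Qd_pos[OF mem(1)])
    have P1: "0 < (\<Prod>i<n. q (ys ! i))" using qp by (intro prod_pos) auto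
    have P2: "0 < (\<Prod>i<n. TY (uj e m k ss i) (ys ! i))" using TYp by (intro prod_pos) auto
    have Mp: "0 < real M" using M_pos by simp
    have Xp: "0 < Xv dec e m k ss ys" unfolding Xv_def using P1 P2 Qp Mp by simp
    have "ln (Xv dec e m k ss ys) = ln (real M) + ln (Qd dec m k ys) + (\<Sum>i<n. ln (q (ys ! i))) - (\<Sum>i<n. ln (TY (uj e m k ss i) (ys ! i)))"
    proof -
      have "ln (Xv dec e m k ss ys) = ln (real M * Qd dec m k ys * (\<Prod>i<n. q (ys ! i))) - ln (\<Prod>i<n. TY (uj e m k ss i) (ys ! i))"
      proof -
        have "0 < real M * Qd dec m k ys * (\<Prod>i<n. q (ys ! i))" using P1 Qp Mp by (intro mult_pos_pos)
        hence nz1: "real M * Qd dec m k ys * (\<Prod>i<n. q (ys ! i)) \<noteq> 0" by linarith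
        have nz2: "(\<Prod>i<n. TY (uj e m k ss i) (ys ! i)) \<noteq> 0" using P2 by linarith
        show ?thesis unfolding Xv_def by (simp only: ln_div nz1 nz2 not_False_eq_True simp_thms if_True)
      qed
      also have "ln (real M * Qd dec m k ys * (\<Prod>i<n. q (ys ! i))) = ln (real M) + ln (Qd dec m k ys) + ln (\<Prod>i<n. q (ys ! i))"
      proof -
        have qnz: "\<forall>a\<in>{..<n}. q (ys ! a) \<noteq> 0" using qp by fastforce
        have "0 < real M * Qd dec m k ys" using Qp Mp by simp
        thus ?thesis using P1 Qp Mp by (simp only: ln_mult_pos)
      qed
      also have "ln (\<Prod>i<n. q (ys ! i)) = (\<Sum>i<n. ln (q (ys ! i)))"
        using qp by (intro ln_prod) (auto simp: less_imp_neq[symmetric])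
      also have "ln (\<Prod>i<n. TY (uj e m k ss i) (ys ! i)) = (\<Sum>i<n. ln (TY (uj e m k ss i) (ys ! i)))"
        using TYp by (intro ln_prod) (auto simp: less_imp_neq[symmetric])
      finally show ?thesis .
    qed
    hence "LX m k e ss ys zs = J e m k ss ys zs * ln (Xv dec e m k ss ys)" by (simp add: LX_def)
    also have "\<dots> \<le> J e m k ss ys zs * (Xv dec e m k ss ys - 1)"
      using Jp Xp by (intro mult_left_mono ln_le_minus_one) auto
    finally show ?thesis by (simp add: algebra_simps)
  qed
  have "Jsum LX \<le> Jsum (\<lambda>m k e ss ys zs. J e m k ss ys zs * Xv dec e m k ss ys - J e m k ss ys zs)"
    by (rule Jsum_mono) (rule key)
  also have "\<dots> \<le> 0" using Jsum_X[of dec] Jsum_one by (simp add: Jsum_diff)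
  finally have LX0: "Jsum LX \<le> 0" .
  have "Jsum LX = Jsum (\<lambda>m k e ss ys zs. J e m k ss ys zs * ln (real M)) + Jsum (\<lambda>m k e ss ys zs. J e m k ss ys zs * ln (Qd dec m k ys))
      + Jsum (\<lambda>m k e ss ys zs. J e m k ss ys zs * (\<Sum>i<n. ln (q (ys ! i))))
      - Jsum (\<lambda>m k e ss ys zs. J e m k ss ys zs * (\<Sum>i<n. ln (TY (uj e m k ss i) (ys ! i))))"
    unfolding LX_def by (simp add: distrib_left right_diff_distrib Jsum_add Jsum_diff)
  also have "\<dots> = ln (real M) + Jsum (\<lambda>m k e ss ys zs. J e m k ss ys zs * ln (Qd dec m k ys))
      + real n * (\<Sum>y\<in>UNIV. q y * ln (q y)) - real n * (\<Sum>u\<in>UNIV. pbar u * (\<Sum>y\<in>UNIV. TY u y * ln (TY u y)))"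
    by (simp add: Jsum_J_const avg_ln_q avg_ln_TY)
  also have "\<dots> = ln (real M) + Jsum (\<lambda>m k e ss ys zs. J e m k ss ys zs * ln (Qd dec m k ys)) - real n * Iobj pbar"
    by (simp add: Iobj_def q_def algebra_simps)
  finally have A: "ln (real M) + Jsum (\<lambda>m k e ss ys zs. J e m k ss ys zs * ln (Qd dec m k ys)) - real n * Iobj pbar \<le> 0"
    using LX0 by simp
  have "Jsum (\<lambda>m k e ss ys zs. J e m k ss ys zs * (- ln 2 - (if dec k ys \<noteq> m then ln (real M) else 0)))
      \<le> Jsum (\<lambda>m k e ss ys zs. J e m k ss ys zs * ln (Qd dec m k ys))"
    by (rule Jsum_mono, rule mult_left_mono, rule Qd_ln, assumption, rule J_nn, assumption)
  moreover have "Jsum (\<lambda>m k e ss ys zs. J e m k ss ys zs * (- ln 2 - (if dec k ys \<noteq> m then ln (real M) else 0)))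
      = - ln 2 - err_prob PS W n M K E w dec * ln (real M)"
  proof -
    have "Jsum (\<lambda>m k e ss ys zs. J e m k ss ys zs * (- ln 2 - (if dec k ys \<noteq> m then ln (real M) else 0)))
       = Jsum (\<lambda>m k e ss ys zs. J e m k ss ys zs * (- ln 2)) - Jsum (\<lambda>m k e ss ys zs. ln (real M) * (J e m k ss ys zs * (if dec k ys \<noteq> m then 1 else 0)))"
      by (subst Jsum_diff[symmetric]) (intro Jsum_cong, simp add: algebra_simps)
    also have "\<dots> = - ln 2 - err_prob PS W n M K E w dec * ln (real M)"
      using Jsum_J_const[of "- ln 2"] by (simp add: Jsum_cmult err_Jsum)
    finally show ?thesis .
  qed
  ultimately show ?thesis using A by simp
qed
end


lemma sum6_swap:
  "(\<Sum>z\<in>Z. \<Sum>m\<in>A. \<Sum>k\<in>B. \<Sum>e\<in>C. \<Sum>s\<in>D. \<Sum>y\<in>F. g z m k e s y) = (\<Sum>m\<in>A. \<Sum>k\<in>B. \<Sum>e\<in>C. \<Sum>s\<in>D. \<Sum>y\<in>F. \<Sum>z\<in>Z. g z m k e s y)"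
proof -
  have "(\<Sum>z\<in>Z. \<Sum>m\<in>A. \<Sum>k\<in>B. \<Sum>e\<in>C. \<Sum>s\<in>D. \<Sum>y\<in>F. g z m k e s y) = (\<Sum>m\<in>A. \<Sum>z\<in>Z. \<Sum>k\<in>B. \<Sum>e\<in>C. \<Sum>s\<in>D. \<Sum>y\<in>F. g z m k e s y)"
    by (rule sum.swap)
  also have "\<dots> = (\<Sum>m\<in>A. \<Sum>k\<in>B. \<Sum>z\<in>Z. \<Sum>e\<in>C. \<Sum>s\<in>D. \<Sum>y\<in>F. g z m k e s y)"
    by (intro sum.cong refl) (rule sum.swap)
  also have "\<dots> = (\<Sum>m\<in>A. \<Sum>k\<in>B. \<Sum>e\<in>C. \<Sum>z\<in>Z. \<Sum>s\<in>D. \<Sum>y\<in>F. g z m k e s y)"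
    by (intro sum.cong refl) (rule sum.swap)
  also have "\<dots> = (\<Sum>m\<in>A. \<Sum>k\<in>B. \<Sum>e\<in>C. \<Sum>s\<in>D. \<Sum>z\<in>Z. \<Sum>y\<in>F. g z m k e s y)"
    by (intro sum.cong refl) (rule sum.swap)
  also have "\<dots> = (\<Sum>m\<in>A. \<Sum>k\<in>B. \<Sum>e\<in>C. \<Sum>s\<in>D. \<Sum>y\<in>F. \<Sum>z\<in>Z. g z m k e s y)"
    by (intro sum.cong refl) (rule sum.swap)
  finally show ?thesis .
qed

context chan begin
definition qZ :: "(('s \<Rightarrow> 'x) \<Rightarrow> real) \<Rightarrow> 'z \<Rightarrow> real" where
  "qZ p z = (\<Sum>u\<in>UNIV. p u * TZ u z)"
definition Dz :: "('z \<Rightarrow> real) \<Rightarrow> ('z \<Rightarrow> real) \<Rightarrow> real" where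
  "Dz P Q = (\<Sum>z\<in>UNIV. P z * ln (P z) - P z * ln (Q z))"

lemma TZ_f: "(\<Sum>s\<in>UNIV. \<Sum>y\<in>UNIV. \<Sum>z\<in>UNIV. PS s * W s (u s) y z * h z) = (\<Sum>z\<in>UNIV. TZ u z * h z)"
proof -
  have "(\<Sum>s\<in>UNIV. \<Sum>y\<in>UNIV. \<Sum>z\<in>UNIV. PS s * W s (u s) y z * h z) = (\<Sum>s\<in>UNIV. \<Sum>z\<in>UNIV. \<Sum>y\<in>UNIV. PS s * W s (u s) y z * h z)"
    by (intro sum.cong refl) (rule sum.swap)
  also have "\<dots> = (\<Sum>z\<in>UNIV. \<Sum>s\<in>UNIV. \<Sum>y\<in>UNIV. PS s * W s (u s) y z * h z)" by (rule sum.swap)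
  also have "\<dots> = (\<Sum>z\<in>UNIV. TZ u z * h z)"
    by (simp add: TZ_def sum_distrib_left sum_distrib_right mult_ac)
  finally show ?thesis .
qed

lemma qZ_sum: "(\<Sum>u\<in>UNIV. p u) = 1 \<Longrightarrow> (\<Sum>z\<in>UNIV. qZ p z) = 1"
  unfolding qZ_def by (subst sum.swap) (simp add: sum_distrib_left[symmetric] TZ_sum)

lemma qZ_nn: "(\<And>u. 0 \<le> p u) \<Longrightarrow> 0 \<le> qZ p z"
  unfolding qZ_def by (intro sum_nonneg mult_nonneg_nonneg TZ_nn) auto
end

context code begin

definition outz where "outz = out_z PS W n M K E w"
definition zq where "zq = qZ pbar"

lemma outz_sum: "(\<Sum>zs\<in>lists_n n. outz zs * f zs) = Jsum (\<lambda>m k e ss ys zs. J e m k ss ys zs * f zs)"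
proof -
  have "(\<Sum>zs\<in>lists_n n. outz zs * f zs) = (\<Sum>zs\<in>lists_n n. \<Sum>m<M. \<Sum>k<K. \<Sum>e\<in>E. \<Sum>ss\<in>lists_n n. \<Sum>ys\<in>lists_n n. J e m k ss ys zs * f zs)"
    unfolding outz_def out_z_def J_def by (simp add: sum_distrib_right)
  also have "\<dots> = Jsum (\<lambda>m k e ss ys zs. J e m k ss ys zs * f zs)"
    unfolding Jsum_def by (rule sum6_swap)
  finally show ?thesis .
qed

lemma outz_nn: "0 \<le> outz zs"
  unfolding outz_def out_z_def by (intro sum_nonneg) (auto simp: J_def[symmetric] intro: J_nn)

lemma outz_total: "(\<Sum>zs\<in>lists_n n. outz zs) = 1"
  using outz_sum[of "\<lambda>_. 1"] Jsum_one by simp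

lemma avg_z: "(\<Sum>zs\<in>lists_n n. outz zs * (\<Sum>i<n. g (zs ! i))) = real n * (\<Sum>z\<in>UNIV. zq z * g z)"
proof -
  have "Jsum (\<lambda>m k e ss ys zs. J e m k ss ys zs * (\<Sum>i<n. (\<lambda>u s y z. g z) (\<lambda>s. e m k (take i ss @ [s])) (ss ! i) (ys ! i) (zs ! i)))
      = real n * (\<Sum>u\<in>UNIV. pbar u * (\<Sum>z\<in>UNIV. TZ u z * g z))"
  proof (rule Jsum_avg)
    fix i assume "i < n"
    from mix_marg[OF this, of "\<lambda>u s y z. g z"]
    show "Jsum (\<lambda>m k e ss ys zs. J e m k ss ys zs * (\<lambda>u s y z. g z) (\<lambda>s. e m k (take i ss @ [s])) (ss ! i) (ys ! i) (zs ! i))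
        = (\<Sum>u\<in>UNIV. PU i u * (\<Sum>z\<in>UNIV. TZ u z * g z))"
      by (simp add: TZ_f)
  qed
  also have "(\<Sum>u\<in>UNIV. pbar u * (\<Sum>z\<in>UNIV. TZ u z * g z)) = (\<Sum>z\<in>UNIV. zq z * g z)"
  proof -
    have "(\<Sum>u\<in>UNIV. pbar u * (\<Sum>z\<in>UNIV. TZ u z * g z)) = (\<Sum>u\<in>UNIV. \<Sum>z\<in>UNIV. pbar u * TZ u z * g z)"
      by (simp add: sum_distrib_left mult.assoc)
    also have "\<dots> = (\<Sum>z\<in>UNIV. \<Sum>u\<in>UNIV. pbar u * TZ u z * g z)" by (rule sum.swap)
    also have "\<dots> = (\<Sum>z\<in>UNIV. zq z * g z)" by (simp add: sum_distrib_right zq_def qZ_def)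
    finally show ?thesis .
  qed
  finally show ?thesis by (simp add: outz_sum)
qed

lemma zq_pos:
  assumes "0 < outz zs" "zs \<in> lists_n n" "i < n"
  shows "0 < zq (zs ! i)"
proof -
  have "Jsum (\<lambda>m k e ss ys zs'. J e m k ss ys zs' * (\<lambda>u s y z. if z = zs ! i then 1 else 0) (\<lambda>s. e m k (take i ss @ [s])) (ss ! i) (ys ! i) (zs' ! i))
      = (\<Sum>u\<in>UNIV. PU i u * (\<Sum>s\<in>UNIV. \<Sum>y\<in>UNIV. \<Sum>z\<in>UNIV. PS s * W s (u s) y z * (if z = zs ! i then 1 else 0)))"
    by (rule mix_marg[OF assms(3)])
  also have "\<dots> = (\<Sum>u\<in>UNIV. PU i u * TZ u (zs ! i))"
  proof -
    have "\<And>u. (\<Sum>z\<in>UNIV. TZ u z * (if z = zs ! i then 1 else 0)) = TZ u (zs ! i)"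
    proof -
      fix u
      have "(\<Sum>z\<in>UNIV. TZ u z * (if z = zs ! i then 1 else 0)) = (\<Sum>z\<in>UNIV. if z = zs ! i then TZ u (zs ! i) else 0)"
        by (rule sum.cong) auto
      thus "(\<Sum>z\<in>UNIV. TZ u z * (if z = zs ! i then 1 else 0)) = TZ u (zs ! i)" by simp
    qed
    thus ?thesis by (simp add: TZ_f)
  qed
  also have "\<dots> \<le> (\<Sum>u\<in>UNIV. (\<Sum>j<n. PU j u) * TZ u (zs ! i))"
    using assms(3) by (intro sum_mono mult_right_mono TZ_nn member_le_sum PU_nn) auto
  also have "\<dots> = real n * zq (zs ! i)"
    using n_pos by (simp add: zq_def qZ_def pbar_def sum_distrib_left)
  finally have le: "(\<Sum>zs'\<in>lists_n n. outz zs' * (if zs' ! i = zs ! i then 1 else 0)) \<le> real n * zq (zs ! i)"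
    by (simp add: outz_sum)
  have "outz zs * (if zs ! i = zs ! i then 1 else 0) \<le> (\<Sum>zs'\<in>lists_n n. outz zs' * (if zs' ! i = zs ! i then 1 else 0))"
    by (rule member_le_sum[OF assms(2)]) (auto intro: outz_nn)
  hence "0 < real n * zq (zs ! i)" using le assms(1) by simp
  thus ?thesis using n_pos by (simp add: zero_less_mult_iff)
qed

lemma zq_sum: "(\<Sum>z\<in>UNIV. zq z) = 1" unfolding zq_def by (rule qZ_sum[OF pbar_sum])
lemma zq_nn: "0 \<le> zq z" unfolding zq_def by (rule qZ_nn[OF pbar_nn])

lemma kl_bound:
  assumes Qp: "\<And>z. 0 < Qz z"
  shows "real n * Dz zq Qz / ln 2 \<le> kl_div n outz (\<lambda>zs. \<Prod>i<length zs. Qz (zs ! i))"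
proof -
  define Pz where "Pz zs = (\<Prod>i<n. zq (zs ! i))" for zs
  have step: "outz zs * (\<Sum>i<n. ln (zq (zs ! i))) \<le> outz zs * ln (outz zs) + (Pz zs - outz zs)"
    if zs: "zs \<in> lists_n n" for zs
  proof (cases "outz zs = 0")
    case True thus ?thesis using zs by (simp add: Pz_def prod_nonneg zq_nn)
  next
    case False
    hence op: "0 < outz zs" using outz_nn[of zs] by simp
    have qp: "\<And>i. i < n \<Longrightarrow> 0 < zq (zs ! i)" using zq_pos[OF op zs] by simp
    have Pp: "0 < Pz zs" unfolding Pz_def using qp by (intro prod_pos) auto
    have "(\<Sum>i<n. ln (zq (zs ! i))) = ln (Pz zs)"
      unfolding Pz_def using qp by (subst ln_prod) (auto simp: less_imp_neq[symmetric])
    also have "ln (Pz zs) = ln (outz zs) + ln (Pz zs / outz zs)" using Pp op by (simp add: ln_div)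
    finally have "outz zs * (\<Sum>i<n. ln (zq (zs ! i))) = outz zs * ln (outz zs) + outz zs * ln (Pz zs / outz zs)"
      by (simp add: algebra_simps)
    also have "outz zs * ln (Pz zs / outz zs) \<le> outz zs * (Pz zs / outz zs - 1)"
      using op Pp by (intro mult_left_mono ln_le_minus_one) auto
    also have "\<dots> = Pz zs - outz zs" using op by (simp add: field_simps)
    finally show ?thesis by simp
  qed
  have sPz: "(\<Sum>zs\<in>lists_n n. Pz zs) = 1"
    unfolding Pz_def using sum_prod_lists_n[of "\<lambda>i. zq" n] by (simp add: zq_sum)
  have "real n * (\<Sum>z\<in>UNIV. zq z * ln (zq z)) = (\<Sum>zs\<in>lists_n n. outz zs * (\<Sum>i<n. ln (zq (zs ! i))))"
    using avg_z[of "\<lambda>z. ln (zq z)"] by simp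
  also have "\<dots> \<le> (\<Sum>zs\<in>lists_n n. outz zs * ln (outz zs) + (Pz zs - outz zs))"
    by (intro sum_mono step)
  also have "\<dots> = (\<Sum>zs\<in>lists_n n. outz zs * ln (outz zs))"
    by (simp add: sum.distrib sum_subtractf sPz outz_total)
  finally have A: "real n * (\<Sum>z\<in>UNIV. zq z * ln (zq z)) \<le> (\<Sum>zs\<in>lists_n n. outz zs * ln (outz zs))" .
  have B: "(\<Sum>zs\<in>lists_n n. outz zs * ln (\<Prod>i<length zs. Qz (zs ! i))) = real n * (\<Sum>z\<in>UNIV. zq z * ln (Qz z))"
  proof -
    have "(\<Sum>zs\<in>lists_n n. outz zs * ln (\<Prod>i<length zs. Qz (zs ! i))) = (\<Sum>zs\<in>lists_n n. outz zs * (\<Sum>i<n. ln (Qz (zs ! i))))"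
      by (intro sum.cong refl) (auto simp: lists_n_def ln_prod Qp less_imp_neq[symmetric])
    thus ?thesis using avg_z[of "\<lambda>z. ln (Qz z)"] by simp
  qed
  have C: "kl_div n outz (\<lambda>zs. \<Prod>i<length zs. Qz (zs ! i))
     = ((\<Sum>zs\<in>lists_n n. outz zs * ln (outz zs)) - (\<Sum>zs\<in>lists_n n. outz zs * ln (\<Prod>i<length zs. Qz (zs ! i)))) / ln 2"
  proof -
    have "\<And>zs. (if outz zs = 0 then 0 else outz zs * log 2 (outz zs / (\<Prod>i<length zs. Qz (zs ! i))))
       = (outz zs * ln (outz zs) - outz zs * ln (\<Prod>i<length zs. Qz (zs ! i))) / ln 2"
    proof -
      fix zs
      define PQ where "PQ = (\<Prod>i<length zs. Qz (zs ! i))"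
      have "0 < PQ" unfolding PQ_def using Qp by (intro prod_pos) auto
      hence nz: "PQ \<noteq> 0" by simp
      show "(if outz zs = 0 then 0 else outz zs * log 2 (outz zs / (\<Prod>i<length zs. Qz (zs ! i))))
       = (outz zs * ln (outz zs) - outz zs * ln (\<Prod>i<length zs. Qz (zs ! i))) / ln 2"
        unfolding PQ_def[symmetric]
      proof (cases "outz zs = 0")
        case False
        hence "ln (outz zs / PQ) = ln (outz zs) - ln PQ" using nz by (simp only: ln_div) simp
        thus "(if outz zs = 0 then 0 else outz zs * log 2 (outz zs / PQ)) = (outz zs * ln (outz zs) - outz zs * ln PQ) / ln 2"
          using False by (simp add: log_def right_diff_distrib)
      qed simp
    qed
    thus ?thesis unfolding kl_div_def by (simp add: sum_divide_distrib[symmetric] sum_subtractf)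
  qed
  have "real n * Dz zq Qz = real n * (\<Sum>z\<in>UNIV. zq z * ln (zq z)) - real n * (\<Sum>z\<in>UNIV. zq z * ln (Qz z))"
    by (simp add: Dz_def sum_subtractf algebra_simps)
  also have "\<dots> \<le> (\<Sum>zs\<in>lists_n n. outz zs * ln (outz zs)) - (\<Sum>zs\<in>lists_n n. outz zs * ln (\<Prod>i<length zs. Qz (zs ! i)))"
    using A B by simp
  finally show ?thesis unfolding C by (simp add: divide_right_mono)
qed

end


lemma kernel_exists:
  fixes c :: "'j \<Rightarrow> 'u \<Rightarrow> real"
  assumes "finite J"
  shows "finite A \<Longrightarrow> card J < card A \<Longrightarrow>
    \<exists>d. (\<forall>u. u \<notin> A \<longrightarrow> d u = 0) \<and> (\<exists>u\<in>A. d u \<noteq> 0) \<and> (\<forall>j\<in>J. (\<Sum>u\<in>A. d u * c j u) = 0)"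
  using assms
proof (induction J arbitrary: A c rule: finite_induct)
  case empty
  then obtain u0 where "u0 \<in> A" by fastforce
  thus ?case by (intro exI[of _ "\<lambda>u. if u = u0 then 1 else 0"]) auto
next
  case (insert j J A c)
  show ?case
  proof (cases "\<forall>u\<in>A. c j u = 0")
    case True
    have "card J < card A" using insert by simp
    then obtain d where d: "\<forall>u. u \<notin> A \<longrightarrow> d u = 0" "\<exists>u\<in>A. d u \<noteq> 0" "\<forall>j\<in>J. (\<Sum>u\<in>A. d u * c j u) = 0"
      using insert.IH[OF insert.prems(1)] by blast
    thus ?thesis using True by (intro exI[of _ d]) auto
  next
    case False
    then obtain a0 where a0: "a0 \<in> A" "c j a0 \<noteq> 0" by blast
    define A' where "A' = A - {a0}"
    define c' where "c' j' u = c j' u - c j' a0 * c j u / c j a0" for j' u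
    have fA': "finite A'" using insert.prems by (simp add: A'_def)
    have cA': "card J < card A'" using insert a0 by (simp add: A'_def)
    obtain d' where d': "\<forall>u. u \<notin> A' \<longrightarrow> d' u = 0" "\<exists>u\<in>A'. d' u \<noteq> 0" "\<forall>j'\<in>J. (\<Sum>u\<in>A'. d' u * c' j' u) = 0"
      using insert.IH[OF fA' cA', of c'] by blast
    define lam where "lam = - (\<Sum>u\<in>A'. d' u * c j u) / c j a0"
    define d where "d u = d' u + (if u = a0 then lam else 0)" for u
    have dA: "(\<Sum>u\<in>A. d u * g u) = (\<Sum>u\<in>A'. d' u * g u) + lam * g a0" for g
    proof -
      have "(\<Sum>u\<in>A. d u * g u) = d a0 * g a0 + (\<Sum>u\<in>A'. d u * g u)"
        unfolding A'_def using a0 insert.prems(1) by (simp add: sum.remove)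
      also have "(\<Sum>u\<in>A'. d u * g u) = (\<Sum>u\<in>A'. d' u * g u)"
        by (intro sum.cong refl) (simp add: d_def A'_def)
      also have "d a0 = lam" using d'(1) by (simp add: d_def A'_def)
      finally show ?thesis by simp
    qed
    have "\<forall>u. u \<notin> A \<longrightarrow> d u = 0" using d'(1) a0 by (auto simp: d_def A'_def)
    moreover have "\<exists>u\<in>A. d u \<noteq> 0" using d'(2) by (auto simp: d_def A'_def)
    moreover have "(\<Sum>u\<in>A. d u * c j u) = 0"
      unfolding dA lam_def using a0 by simp
    moreover have "(\<Sum>u\<in>A. d u * c j' u) = 0" if j': "j' \<in> J" for j'
    proof -
      have "(\<Sum>u\<in>A'. d' u * c j' u) = (\<Sum>u\<in>A'. d' u * c' j' u) + (c j' a0 / c j a0) * (\<Sum>u\<in>A'. d' u * c j u)"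
      proof -
        have "\<And>u. d' u * c j' u = d' u * c' j' u + (c j' a0 / c j a0) * (d' u * c j u)"
          using a0 by (simp add: c'_def field_simps)
        thus ?thesis by (simp add: sum.distrib sum_distrib_left)
      qed
      also have "\<dots> = (c j' a0 / c j a0) * (\<Sum>u\<in>A'. d' u * c j u)" using d'(3) j' by simp
      finally show ?thesis unfolding dA lam_def using a0 by (simp add: field_simps)
    qed
    ultimately show ?thesis by (intro exI[of _ d]) auto
  qed
qed


context chan begin

definition cst :: "('x \<Rightarrow> real) \<Rightarrow> (('s \<Rightarrow> 'x) \<Rightarrow> real) \<Rightarrow> real" where
  "cst b p = (\<Sum>u\<in>UNIV. p u * (\<Sum>s\<in>UNIV. PS s * b (u s)))"
definition supp :: "(('s \<Rightarrow> 'x) \<Rightarrow> real) \<Rightarrow> ('s \<Rightarrow> 'x) set" where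
  "supp p = {u. p u \<noteq> 0}"
definition Hf :: "('s \<Rightarrow> 'x) \<Rightarrow> real" where
  "Hf u = (\<Sum>y\<in>UNIV. TY u y * ln (TY u y))"
definition pres :: "('x \<Rightarrow> real) \<Rightarrow> (('s \<Rightarrow> 'x) \<Rightarrow> real) \<Rightarrow> bool" where
  "pres b d \<longleftrightarrow> (\<Sum>u\<in>UNIV. d u) = 0 \<and> (\<forall>y. (\<Sum>u\<in>UNIV. d u * TY u y) = 0) \<and> (\<forall>z. (\<Sum>u\<in>UNIV. d u * TZ u z) = 0)
     \<and> (\<Sum>u\<in>UNIV. d u * (\<Sum>s\<in>UNIV. PS s * b (u s))) = 0"

lemma Iobj_Hf: "Iobj p = (\<Sum>u\<in>UNIV. p u * Hf u) - (\<Sum>y\<in>UNIV. qY p y * ln (qY p y))"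
  by (simp add: Iobj_def Hf_def)

lemma step0:
  assumes p_nn: "\<And>u. 0 \<le> p u" and dsupp: "\<And>u. p u = 0 \<Longrightarrow> d u = 0" and dnz: "d u0 \<noteq> 0"
    and pr: "pres b d" and dH: "0 \<le> (\<Sum>u\<in>UNIV. d u * Hf u)"
  shows "\<exists>p'. (\<forall>u. 0 \<le> p' u) \<and> card (supp p') < card (supp p) \<and> (\<Sum>u\<in>UNIV. p' u) = (\<Sum>u\<in>UNIV. p u)
     \<and> qZ p' = qZ p \<and> cst b p' = cst b p \<and> Iobj p \<le> Iobj p'"
proof -
  have s0: "(\<Sum>u\<in>UNIV. d u) = 0" using pr by (simp add: pres_def)
  have "\<exists>u. d u < 0"
  proof (rule ccontr)
    assume "\<not> (\<exists>u. d u < 0)"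
    hence "\<forall>u\<in>UNIV. 0 \<le> d u" by (simp add: not_less)
    hence "\<forall>u\<in>UNIV. d u = 0" using s0 sum_nonneg_eq_0_iff[of UNIV d] by simp
    thus False using dnz by simp
  qed
  define N where "N = {u. d u < 0}"
  have fN: "finite N" "N \<noteq> {}" using \<open>\<exists>u. d u < 0\<close> by (auto simp: N_def)
  define t where "t = Min ((\<lambda>u. p u / (- d u)) ` N)"
  have "t \<in> (\<lambda>u. p u / (- d u)) ` N" unfolding t_def by (rule Min_in) (use fN in auto)
  then obtain us where us: "us \<in> N" "t = p us / (- d us)" by blast
  have t_le: "\<And>u. u \<in> N \<Longrightarrow> t \<le> p u / (- d u)" unfolding t_def using fN by simp
  have pN: "\<And>u. u \<in> N \<Longrightarrow> 0 < p u"
  proof -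
    fix u assume "u \<in> N"
    hence "d u \<noteq> 0" by (simp add: N_def)
    hence "p u \<noteq> 0" using dsupp by blast
    thus "0 < p u" using p_nn[of u] by simp
  qed
  have tpos: "0 < t" using us pN[OF us(1)] by (simp add: N_def divide_pos_neg)
  define p' where "p' u = p u + t * d u" for u
  have p'_nn: "0 \<le> p' u" for u
  proof (cases "u \<in> N")
    case True
    hence "t \<le> p u / (- d u)" "d u < 0" using t_le by (auto simp: N_def)
    hence "t * (- d u) \<le> p u" by (simp add: field_simps)
    thus ?thesis by (simp add: p'_def)
  next
    case False
    hence "0 \<le> d u" by (simp add: N_def)
    thus ?thesis using p_nn[of u] tpos by (simp add: p'_def)
  qed
  have p'us: "p' us = 0" using us by (simp add: p'_def N_def field_simps)
  have sub: "supp p' \<subseteq> supp p - {us}"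
    using p'us dsupp by (auto simp: supp_def p'_def)
  have usin: "us \<in> supp p" using pN[OF us(1)] by (simp add: supp_def)
  have "card (supp p') \<le> card (supp p - {us})" by (rule card_mono) (simp_all add: sub)
  also have "\<dots> < card (supp p)" using usin by (intro card_Diff1_less) simp_all
  finally have cardlt: "card (supp p') < card (supp p)" .
  have lin: "(\<Sum>u\<in>UNIV. p' u * g u) = (\<Sum>u\<in>UNIV. p u * g u) + t * (\<Sum>u\<in>UNIV. d u * g u)" for g
    by (simp add: p'_def distrib_right sum.distrib sum_distrib_left mult.assoc)
  have "(\<Sum>u\<in>UNIV. p' u) = (\<Sum>u\<in>UNIV. p u)" using lin[of "\<lambda>_. 1"] s0 by simp
  moreover have qY': "qY p' = qY p" using pr by (auto simp: qY_def lin pres_def)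
  moreover have "qZ p' = qZ p" using pr by (auto simp: qZ_def lin pres_def)
  moreover have "cst b p' = cst b p" using pr by (simp add: cst_def lin pres_def)
  moreover have "Iobj p \<le> Iobj p'"
    unfolding Iobj_Hf qY' lin using tpos dH by simp
  ultimately show ?thesis using p'_nn cardlt by blast
qed

lemma pres_neg: "pres b d \<Longrightarrow> pres b (\<lambda>u. - d u)"
  by (simp add: pres_def sum_negf)

lemma step:
  assumes p_nn: "\<And>u. 0 \<le> p u" and dsupp: "\<And>u. p u = 0 \<Longrightarrow> d u = 0" and dnz: "d u0 \<noteq> 0"
    and pr: "pres b d"
  shows "\<exists>p'. (\<forall>u. 0 \<le> p' u) \<and> card (supp p') < card (supp p) \<and> (\<Sum>u\<in>UNIV. p' u) = (\<Sum>u\<in>UNIV. p u)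
     \<and> qZ p' = qZ p \<and> cst b p' = cst b p \<and> Iobj p \<le> Iobj p'"
proof (cases "0 \<le> (\<Sum>u\<in>UNIV. d u * Hf u)")
  case True show ?thesis by (rule step0[OF p_nn dsupp dnz pr True])
next
  case False
  hence "0 \<le> (\<Sum>u\<in>UNIV. - d u * Hf u)" by (simp add: sum_negf)
  have "\<And>u. p u = 0 \<Longrightarrow> - d u = 0" using dsupp by simp
  moreover have "- d u0 \<noteq> 0" using dnz by simp
  ultimately show ?thesis using step0[OF p_nn _ _ pres_neg[OF pr]] \<open>0 \<le> (\<Sum>u\<in>UNIV. - d u * Hf u)\<close> by simp
qed


lemma fun_ind_sum: "(\<Sum>u\<in>UNIV. d u * phi s (u s)) = (\<Sum>x\<in>UNIV. phi s x * (\<Sum>u\<in>UNIV. d u * (if u s = x then 1 else 0)))"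
  for phi :: "'s \<Rightarrow> 'x \<Rightarrow> real" and d :: "('s \<Rightarrow> 'x) \<Rightarrow> real"
proof -
  have "\<And>u. phi s (u s) = (\<Sum>x\<in>UNIV. phi s x * (if u s = x then 1 else 0))"
  proof -
    fix u
    have "(\<Sum>x\<in>UNIV. phi s x * (if u s = x then 1 else 0)) = (\<Sum>x\<in>UNIV. if u s = x then phi s (u s) else 0)"
      by (rule sum.cong) auto
    thus "phi s (u s) = (\<Sum>x\<in>UNIV. phi s x * (if u s = x then 1 else (0::real)))" by simp
  qed
  hence "(\<Sum>u\<in>UNIV. d u * phi s (u s)) = (\<Sum>u\<in>UNIV. \<Sum>x\<in>UNIV. d u * (phi s x * (if u s = x then 1 else 0)))"
    by (simp add: sum_distrib_left)
  also have "\<dots> = (\<Sum>x\<in>UNIV. \<Sum>u\<in>UNIV. d u * (phi s x * (if u s = x then 1 else 0)))" by (rule sum.swap)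
  also have "\<dots> = (\<Sum>x\<in>UNIV. phi s x * (\<Sum>u\<in>UNIV. d u * (if u s = x then 1 else 0)))"
    by (simp add: sum_distrib_left mult_ac)
  finally show ?thesis .
qed

lemma presB:
  assumes s0: "(\<Sum>u\<in>UNIV. d u) = 0"
    and sx: "\<And>s x. x \<noteq> x1 \<Longrightarrow> (\<Sum>u\<in>UNIV. d u * (if u s = x then 1 else 0)) = 0"
  shows "pres b d"
proof -
  have all: "(\<Sum>u\<in>UNIV. d u * (if u s = x then 1 else 0)) = 0" for s x
  proof (cases "x = x1")
    case False thus ?thesis by (rule sx)
  next
    case True
    have "(\<Sum>u\<in>UNIV. d u * (\<lambda>s x. 1) s (u s)) = (\<Sum>x\<in>UNIV. (\<Sum>u\<in>UNIV. d u * (if u s = x then 1 else 0)))"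
      using fun_ind_sum[of d "\<lambda>s x. 1" s] by simp
    also have "\<dots> = (\<Sum>u\<in>UNIV. d u * (if u s = x1 then 1 else 0)) + (\<Sum>x\<in>UNIV - {x1}. (\<Sum>u\<in>UNIV. d u * (if u s = x then 1 else 0)))"
      by (rule sum.remove) auto
    also have "(\<Sum>x\<in>UNIV - {x1}. (\<Sum>u\<in>UNIV. d u * (if u s = x then 1 else 0))) = 0"
      by (rule sum.neutral) (simp add: sx)
    finally show ?thesis using s0 True by simp
  qed
  have phi0: "(\<Sum>u\<in>UNIV. d u * (\<Sum>s\<in>UNIV. phi s (u s))) = 0" for phi
  proof -
    have "(\<Sum>u\<in>UNIV. d u * (\<Sum>s\<in>UNIV. phi s (u s))) = (\<Sum>s\<in>UNIV. \<Sum>u\<in>UNIV. d u * phi s (u s))"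
      by (simp add: sum_distrib_left) (rule sum.swap)
    also have "\<dots> = 0" by (simp add: fun_ind_sum all)
    finally show ?thesis .
  qed
  show ?thesis unfolding pres_def
  proof (intro conjI allI)
    show "(\<Sum>u\<in>UNIV. d u) = 0" by (rule s0)
    fix y show "(\<Sum>u\<in>UNIV. d u * TY u y) = 0"
      using phi0[of "\<lambda>s x. PS s * WY s x y"] by (simp add: TY_def)
  next
    fix z show "(\<Sum>u\<in>UNIV. d u * TZ u z) = 0"
      using phi0[of "\<lambda>s x. PS s * (\<Sum>y\<in>UNIV. W s x y z)"] by (simp add: TZ_def)
  next
    show "(\<Sum>u\<in>UNIV. d u * (\<Sum>s\<in>UNIV. PS s * b (u s))) = 0"
      using phi0[of "\<lambda>s x. PS s * b x"] by simp
  qed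
qed

lemma presA:
  assumes ty: "\<And>y. (\<Sum>u\<in>UNIV. d u * TY u y) = 0"
    and tz: "\<And>z. z \<noteq> z0 \<Longrightarrow> (\<Sum>u\<in>UNIV. d u * TZ u z) = 0"
    and co: "(\<Sum>u\<in>UNIV. d u * (\<Sum>s\<in>UNIV. PS s * b (u s))) = 0"
  shows "pres b d"
proof -
  have s0: "(\<Sum>u\<in>UNIV. d u) = 0"
  proof -
    have "(\<Sum>u\<in>UNIV. d u) = (\<Sum>u\<in>UNIV. d u * (\<Sum>y\<in>UNIV. TY u y))" by (simp add: TY_sum)
    also have "\<dots> = (\<Sum>y\<in>UNIV. \<Sum>u\<in>UNIV. d u * TY u y)" by (simp add: sum_distrib_left) (rule sum.swap)
    also have "\<dots> = 0" by (simp add: ty)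
    finally show ?thesis .
  qed
  have tzall: "(\<Sum>u\<in>UNIV. d u * TZ u z) = 0" for z
  proof (cases "z = z0")
    case False thus ?thesis by (rule tz)
  next
    case True
    have "0 = (\<Sum>u\<in>UNIV. d u * (\<Sum>z\<in>UNIV. TZ u z))" using s0 by (simp add: TZ_sum)
    also have "\<dots> = (\<Sum>z\<in>UNIV. \<Sum>u\<in>UNIV. d u * TZ u z)" by (simp add: sum_distrib_left) (rule sum.swap)
    also have "\<dots> = (\<Sum>u\<in>UNIV. d u * TZ u z0) + (\<Sum>z\<in>UNIV - {z0}. \<Sum>u\<in>UNIV. d u * TZ u z)"
      by (rule sum.remove) auto
    also have "(\<Sum>z\<in>UNIV - {z0}. \<Sum>u\<in>UNIV. d u * TZ u z) = 0"
      by (rule sum.neutral) (simp add: tz)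
    finally show ?thesis using True by simp
  qed
  show ?thesis unfolding pres_def using s0 ty tzall co by blast
qed

end


lemma sum_supp_univ: "(\<forall>u. u \<notin> A \<longrightarrow> d u = 0) \<Longrightarrow> (\<Sum>u\<in>A. d u * g u) = (\<Sum>u\<in>UNIV. d u * (g u :: real))"
  for A :: "('a::finite) set"
  by (rule sum.mono_neutral_left) auto

context chan begin


lemma finite_supp[simp]: "finite (supp p)" by simp

lemma kernel_B:
  assumes "((CARD('x) - 1) * CARD('s) + 1) < card (supp p)"
  shows "\<exists>d. (\<forall>u. p u = 0 \<longrightarrow> d u = 0) \<and> (\<exists>u. d u \<noteq> 0) \<and> pres b d"
proof -
  obtain x1 :: 'x where True by simp
  define JB :: "('s \<times> 'x) option set" where "JB = insert None (Some ` (UNIV \<times> (UNIV - {x1})))"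
  define cB where "cB j u = (case j of None \<Rightarrow> 1 | Some (s, x) \<Rightarrow> if u s = x then 1 else (0::real))" for j and u :: "'s \<Rightarrow> 'x"
  have "card JB = CARD('s) * (CARD('x) - 1) + 1"
  proof -
    have "card (Some ` (UNIV \<times> (UNIV - {x1})) :: ('s \<times> 'x) option set) = CARD('s) * (CARD('x) - 1)"
      by (subst card_image) (simp_all add: card_cartesian_product)
    thus ?thesis unfolding JB_def by simp
  qed
  hence "card JB < card (supp p)" using assms by (simp add: mult.commute)
  then obtain d where d: "\<forall>u. u \<notin> supp p \<longrightarrow> d u = 0" "\<exists>u\<in>supp p. d u \<noteq> 0" "\<forall>j\<in>JB. (\<Sum>u\<in>supp p. d u * cB j u) = 0"
    using kernel_exists[of JB "supp p" cB] by (auto simp: JB_def)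
  have dU: "\<forall>j\<in>JB. (\<Sum>u\<in>UNIV. d u * cB j u) = 0" using d(3) sum_supp_univ[OF d(1)] by simp
  have "(\<Sum>u\<in>UNIV. d u) = 0" using dU by (auto simp: JB_def cB_def)
  moreover have "\<And>s x. x \<noteq> x1 \<Longrightarrow> (\<Sum>u\<in>UNIV. d u * (if u s = x then 1 else 0)) = 0"
  proof -
    fix s x assume "x \<noteq> x1"
    hence "Some (s, x) \<in> JB" by (simp add: JB_def)
    thus "(\<Sum>u\<in>UNIV. d u * (if u s = x then 1 else 0)) = 0" using dU by (auto simp: cB_def)
  qed
  ultimately have "pres b d" by (rule presB)
  moreover have "\<forall>u. p u = 0 \<longrightarrow> d u = 0" using d(1) by (simp add: supp_def)
  moreover have "\<exists>u. d u \<noteq> 0" using d(2) by blast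
  ultimately show ?thesis by blast
qed

lemma kernel_A:
  assumes "CARD('y) + CARD('z) < card (supp p)"
  shows "\<exists>d. (\<forall>u. p u = 0 \<longrightarrow> d u = 0) \<and> (\<exists>u. d u \<noteq> 0) \<and> pres b d"
proof -
  obtain z0 :: 'z where True by simp
  define JA :: "('y + 'z option) set" where "JA = range Inl \<union> Inr ` insert None (Some ` (UNIV - {z0}))"
  define cA where "cA j u = (case j of Inl y \<Rightarrow> TY u y | Inr None \<Rightarrow> (\<Sum>s\<in>UNIV. PS s * b (u s)) | Inr (Some z) \<Rightarrow> TZ u z)" for j u
  have "card JA = CARD('y) + CARD('z)"
  proof -
    have c1: "card (range Inl :: ('y + 'z option) set) = CARD('y)" by (simp add: card_image)
    have "card (Some ` (UNIV - {z0})) = CARD('z) - 1" by (simp add: card_image)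
    hence "card (insert None (Some ` (UNIV - {z0}))) = CARD('z)" by simp
    moreover have "inj_on (Inr :: 'z option \<Rightarrow> 'y + 'z option) (insert None (Some ` (UNIV - {z0})))"
      by (simp add: inj_on_def)
    ultimately have c2: "card (Inr ` insert None (Some ` (UNIV - {z0})) :: ('y + 'z option) set) = CARD('z)"
      by (simp only: card_image)
    have "card JA = card (range Inl :: ('y + 'z option) set) + card (Inr ` insert None (Some ` (UNIV - {z0})) :: ('y + 'z option) set)"
      unfolding JA_def by (rule card_Un_disjoint) auto
    thus ?thesis using c1 c2 by simp
  qed
  hence "card JA < card (supp p)" using assms by simp
  then obtain d where d: "\<forall>u. u \<notin> supp p \<longrightarrow> d u = 0" "\<exists>u\<in>supp p. d u \<noteq> 0" "\<forall>j\<in>JA. (\<Sum>u\<in>supp p. d u * cA j u) = 0"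
    using kernel_exists[of JA "supp p" cA] by (auto simp: JA_def)
  have dU: "\<forall>j\<in>JA. (\<Sum>u\<in>UNIV. d u * cA j u) = 0" using d(3) sum_supp_univ[OF d(1)] by simp
  have ty: "\<And>y. (\<Sum>u\<in>UNIV. d u * TY u y) = 0"
  proof -
    fix y :: 'y
    have "Inl y \<in> JA" by (simp add: JA_def)
    thus "(\<Sum>u\<in>UNIV. d u * TY u y) = 0" using dU by (auto simp: cA_def)
  qed
  have tz: "\<And>z. z \<noteq> z0 \<Longrightarrow> (\<Sum>u\<in>UNIV. d u * TZ u z) = 0"
  proof -
    fix z :: 'z assume "z \<noteq> z0"
    hence "Inr (Some z) \<in> JA" by (simp add: JA_def)
    thus "(\<Sum>u\<in>UNIV. d u * TZ u z) = 0" using dU by (auto simp: cA_def)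
  qed
  have co: "(\<Sum>u\<in>UNIV. d u * (\<Sum>s\<in>UNIV. PS s * b (u s))) = 0"
  proof -
    have "Inr None \<in> JA" by (simp add: JA_def)
    thus ?thesis using dU by (auto simp: cA_def)
  qed
  have "pres b d" by (rule presA[OF ty tz co])
  moreover have "\<forall>u. p u = 0 \<longrightarrow> d u = 0" using d(1) by (simp add: supp_def)
  moreover have "\<exists>u. d u \<noteq> 0" using d(2) by blast
  ultimately show ?thesis by blast
qed

lemma reduce_aux:
  "\<forall>p. (\<forall>u. 0 \<le> p u) \<longrightarrow> card (supp p) = N \<longrightarrow>
     (\<exists>p'. (\<forall>u. 0 \<le> p' u) \<and> card (supp p') \<le> min (CARD('x) + CARD('y) + CARD('z) - 2) ((CARD('x) - 1) * CARD('s) + 1) \<and> (\<Sum>u\<in>UNIV. p' u) = (\<Sum>u\<in>UNIV. p u)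
        \<and> qZ p' = qZ p \<and> cst b p' = cst b p \<and> Iobj p \<le> Iobj p')"
proof (induction N rule: less_induct)
  case (less N)
  show ?case
  proof (intro allI impI)
    fix p :: "('s \<Rightarrow> 'x) \<Rightarrow> real" assume nn: "\<forall>u. 0 \<le> p u" and cN: "card (supp p) = N"
    show "\<exists>p'. (\<forall>u. 0 \<le> p' u) \<and> card (supp p') \<le> min (CARD('x) + CARD('y) + CARD('z) - 2) ((CARD('x) - 1) * CARD('s) + 1) \<and> (\<Sum>u\<in>UNIV. p' u) = (\<Sum>u\<in>UNIV. p u)
        \<and> qZ p' = qZ p \<and> cst b p' = cst b p \<and> Iobj p \<le> Iobj p'"
    proof (cases "card (supp p) \<le> min (CARD('x) + CARD('y) + CARD('z) - 2) ((CARD('x) - 1) * CARD('s) + 1)")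
      case True thus ?thesis using nn by blast
    next
      case False
      have "\<exists>d. (\<forall>u. p u = 0 \<longrightarrow> d u = 0) \<and> (\<exists>u. d u \<noteq> 0) \<and> pres b d"
      proof (cases "((CARD('x) - 1) * CARD('s) + 1) < card (supp p)")
        case True thus ?thesis by (rule kernel_B)
      next
        case F2: False
        hence lt1: "(CARD('x) + CARD('y) + CARD('z) - 2) < card (supp p)" using False by simp
        have cx: "1 \<le> CARD('x)" "1 \<le> CARD('y)" "1 \<le> CARD('z)" by (simp_all add: Suc_leI)
        have "2 \<le> CARD('x)"
        proof (rule ccontr)
          assume "\<not> 2 \<le> CARD('x)"
          hence "CARD('x) = 1" using cx by linarith
          hence "((CARD('x) - 1) * CARD('s) + 1) = 1" by simp
          thus False using lt1 F2 cx by linarith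
        qed
        hence "CARD('y) + CARD('z) < card (supp p)" using lt1 by simp
        thus ?thesis by (rule kernel_A)
      qed
      then obtain d u0 where d: "\<forall>u. p u = 0 \<longrightarrow> d u = 0" "d u0 \<noteq> 0" "pres b d" by blast
      obtain p'' where p'': "\<forall>u. 0 \<le> p'' u" "card (supp p'') < card (supp p)" "(\<Sum>u\<in>UNIV. p'' u) = (\<Sum>u\<in>UNIV. p u)"
        "qZ p'' = qZ p" "cst b p'' = cst b p" "Iobj p \<le> Iobj p''"
        using step[of p d u0 b] nn d by blast
      obtain p' where p': "\<forall>u. 0 \<le> p' u" "card (supp p') \<le> min (CARD('x) + CARD('y) + CARD('z) - 2) ((CARD('x) - 1) * CARD('s) + 1)" "(\<Sum>u\<in>UNIV. p' u) = (\<Sum>u\<in>UNIV. p'' u)"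
        "qZ p' = qZ p''" "cst b p' = cst b p''" "Iobj p'' \<le> Iobj p'"
        using less.IH[of "card (supp p'')"] p''(1,2) cN by blast
      show ?thesis using p' p'' by (intro exI[of _ p']) auto
    qed
  qed
qed

end


context chan begin

lemma reindex_supp:
  fixes k :: nat
  assumes h: "bij_betw h {0..<k} (supp p)"
  shows "(\<Sum>v<k. p (h v) * F (h v)) = (\<Sum>u\<in>UNIV. p u * F u)"
proof -
  have "(\<Sum>v<k. p (h v) * F (h v)) = (\<Sum>v\<in>{0..<k}. p (h v) * F (h v))"
    by (rule sum.cong) auto
  also have "\<dots> = (\<Sum>u\<in>supp p. p u * F u)"
    by (rule sum.reindex_bij_betw[OF h])
  also have "\<dots> = (\<Sum>u\<in>UNIV. p u * F u)"
    by (rule sum.mono_neutral_left) (auto simp: supp_def)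
  finally show ?thesis .
qed

lemma joint_VY_eq: "joint_VY PS W PV xf v y = PV v * TY (xf v) y"
  unfolding joint_VY_def TY_def WY_def by (simp add: sum_distrib_left mult_ac)

lemma mi_eq:
  assumes h: "bij_betw h {0..<k} (supp p)" and nn: "\<And>u. 0 \<le> p u"
  shows "mutual_info (joint_VY PS W (\<lambda>v. p (h v)) h) {..<k} UNIV = Iobj p / ln 2"
proof -
  define PV where "PV v = p (h v)" for v
  have mA: "(\<Sum>y'\<in>UNIV. joint_VY PS W PV h a y') = PV a" for a
    by (simp add: joint_VY_eq sum_distrib_left[symmetric] TY_sum)
  have mB: "(\<Sum>a'\<in>{..<k}. joint_VY PS W PV h a' y) = qY p y" for y
    using reindex_supp[OF h, of "\<lambda>u. TY u y"] by (simp add: joint_VY_eq PV_def qY_def)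
  have trm: "(if joint_VY PS W PV h a y = 0 then 0 else joint_VY PS W PV h a y * log 2 (joint_VY PS W PV h a y /
        ((\<Sum>b'\<in>UNIV. joint_VY PS W PV h a b') * (\<Sum>a'\<in>{..<k}. joint_VY PS W PV h a' y))))
     = (PV a * TY (h a) y * ln (TY (h a) y) - PV a * TY (h a) y * ln (qY p y)) / ln 2" if a: "a < k" for a y
  proof (cases "PV a * TY (h a) y = 0")
    case True thus ?thesis by (simp add: joint_VY_eq)
  next
    case False
    hence pa: "0 < PV a" and ty: "0 < TY (h a) y"
      using nn[of "h a"] TY_nn[of "h a" y] by (auto simp: PV_def order_le_neq_trans)
    have "PV a * TY (h a) y \<le> qY p y" unfolding qY_def PV_def
      by (rule member_le_sum[of "h a" UNIV "\<lambda>u. p u * TY u y"]) (auto intro: mult_nonneg_nonneg nn TY_nn)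
    hence qp: "0 < qY p y" using pa ty by (smt (verit) mult_pos_pos)
    have e1: "joint_VY PS W PV h a y / ((\<Sum>b'\<in>UNIV. joint_VY PS W PV h a b') * (\<Sum>a'\<in>{..<k}. joint_VY PS W PV h a' y))
        = TY (h a) y / qY p y" unfolding mA mB using pa by (simp add: joint_VY_eq)
    have lnd: "ln (TY (h a) y / qY p y) = ln (TY (h a) y) - ln (qY p y)" using ty qp by (simp add: ln_div)
    have nz: "joint_VY PS W PV h a y \<noteq> 0" using False by (simp add: joint_VY_eq)
    have "(if joint_VY PS W PV h a y = 0 then 0 else joint_VY PS W PV h a y * log 2 (joint_VY PS W PV h a y /
        ((\<Sum>b'\<in>UNIV. joint_VY PS W PV h a b') * (\<Sum>a'\<in>{..<k}. joint_VY PS W PV h a' y))))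
       = joint_VY PS W PV h a y * log 2 (TY (h a) y / qY p y)"
      unfolding e1 using nz by simp
    also have "\<dots> = PV a * TY (h a) y * ((ln (TY (h a) y) - ln (qY p y)) / ln 2)"
      by (simp only: log_def lnd joint_VY_eq)
    also have "\<dots> = (PV a * TY (h a) y * ln (TY (h a) y) - PV a * TY (h a) y * ln (qY p y)) / ln 2"
      by (simp add: algebra_simps diff_divide_distrib)
    finally show ?thesis .
  qed
  have "mutual_info (joint_VY PS W PV h) {..<k} UNIV
      = (\<Sum>a<k. \<Sum>y\<in>UNIV. (PV a * TY (h a) y * ln (TY (h a) y) - PV a * TY (h a) y * ln (qY p y)) / ln 2)"
    unfolding mutual_info_def by (intro sum.cong refl) (simp add: trm)
  also have "\<dots> = ((\<Sum>a<k. PV a * Hf (h a)) - (\<Sum>y\<in>UNIV. (\<Sum>a<k. PV a * TY (h a) y) * ln (qY p y))) / ln 2"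
  proof -
    have "(\<Sum>a<k. \<Sum>y\<in>UNIV. PV a * TY (h a) y * ln (qY p y)) = (\<Sum>y\<in>UNIV. (\<Sum>a<k. PV a * TY (h a) y) * ln (qY p y))"
      by (subst sum.swap) (simp add: sum_distrib_right)
    thus ?thesis
      by (simp add: sum_divide_distrib[symmetric] sum_subtractf Hf_def sum_distrib_left mult.assoc)
  qed
  also have "\<dots> = Iobj p / ln 2"
    using reindex_supp[OF h, of Hf] mB by (simp add: PV_def Iobj_Hf joint_VY_eq)
  finally show ?thesis unfolding PV_def .
qed

lemma to_bound:
  assumes nn: "\<And>u. 0 \<le> p u" and s1: "(\<Sum>u\<in>UNIV. p u) = 1" and qz: "\<And>z. qZ p z = Q0 PS W x0 z"
    and co: "cst b p \<le> B"
  shows "ereal (Iobj p / ln 2) \<le> causal_bound PS W x0 b B"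
proof -
  obtain p' where p': "\<forall>u. 0 \<le> p' u" "card (supp p') \<le> min (CARD('x) + CARD('y) + CARD('z) - 2) ((CARD('x) - 1) * CARD('s) + 1)"
    "(\<Sum>u\<in>UNIV. p' u) = (\<Sum>u\<in>UNIV. p u)" "qZ p' = qZ p" "cst b p' = cst b p" "Iobj p \<le> Iobj p'"
    using reduce_aux[of "card (supp p)" b] nn by blast
  define k where "k = card (supp p')"
  obtain h where h: "bij_betw h {0..<k} (supp p')"
    using ex_bij_betw_nat_finite[of "supp p'"] unfolding k_def by auto
  have "supp p' \<noteq> {}"
  proof
    assume "supp p' = {}"
    hence "\<forall>u. p' u = 0" by (auto simp: supp_def)
    thus False using p'(3) s1 by simp
  qed
  hence k1: "1 \<le> k" unfolding k_def by (simp add: Suc_leI card_gt_0_iff)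
  define PV where "PV v = p' (h v)" for v
  have "mutual_info (joint_VY PS W PV h) {..<k} UNIV \<in> {mutual_info (joint_VY PS W PV xf) {..<k} UNIV | k PV xf.
       1 \<le> k \<and>
       k \<le> min (card (UNIV :: 'x set) + card (UNIV :: 'y set) + card (UNIV :: 'z set) - 2) ((card (UNIV :: 'x set) - 1) * card (UNIV :: 's set) + 1) \<and>
       (\<forall>v<k. 0 \<le> PV v) \<and> (\<Sum>v<k. PV v) = 1 \<and>
       (\<forall>z. (\<Sum>v<k. \<Sum>s\<in>UNIV. PV v * PS s * (\<Sum>y\<in>UNIV. W s (xf v s) y z)) = Q0 PS W x0 z) \<and>
       (\<Sum>v<k. \<Sum>s\<in>UNIV. PV v * PS s * b (xf v s)) \<le> B}"
  proof (intro CollectI exI conjI allI impI)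
    show "1 \<le> k" by (rule k1)
    show "k \<le> min (card (UNIV :: 'x set) + card (UNIV :: 'y set) + card (UNIV :: 'z set) - 2) ((card (UNIV :: 'x set) - 1) * card (UNIV :: 's set) + 1)"
      using p'(2) by (simp add: k_def)
    fix v assume "v < k" thus "0 \<le> PV v" using p'(1) by (simp add: PV_def)
  next
    show "(\<Sum>v<k. PV v) = 1" using reindex_supp[OF h, of "\<lambda>_. 1"] p'(3) s1 by (simp add: PV_def)
  next
    fix z
    have "(\<Sum>v<k. \<Sum>s\<in>UNIV. PV v * PS s * (\<Sum>y\<in>UNIV. W s (h v s) y z)) = (\<Sum>v<k. PV v * TZ (h v) z)"
      by (simp add: TZ_def sum_distrib_left mult.assoc)
    also have "\<dots> = qZ p' z" using reindex_supp[OF h, of "\<lambda>u. TZ u z"] by (simp add: PV_def qZ_def)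
    finally show "(\<Sum>v<k. \<Sum>s\<in>UNIV. PV v * PS s * (\<Sum>y\<in>UNIV. W s (h v s) y z)) = Q0 PS W x0 z"
      using p'(4) qz by simp
  next
    have "(\<Sum>v<k. \<Sum>s\<in>UNIV. PV v * PS s * b (h v s)) = (\<Sum>v<k. PV v * (\<Sum>s\<in>UNIV. PS s * b (h v s)))"
      by (simp add: sum_distrib_left mult.assoc)
    also have "\<dots> = cst b p'" using reindex_supp[OF h, of "\<lambda>u. \<Sum>s\<in>UNIV. PS s * b (u s)"] by (simp add: PV_def cst_def)
    finally show "(\<Sum>v<k. \<Sum>s\<in>UNIV. PV v * PS s * b (h v s)) \<le> B" using p'(5) co by simp
  qed (rule refl)
  moreover have "mutual_info (joint_VY PS W PV h) {..<k} UNIV = Iobj p' / ln 2"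
    unfolding PV_def by (rule mi_eq[OF h]) (use p'(1) in auto)
  ultimately have "ereal (Iobj p' / ln 2) \<le> causal_bound PS W x0 b B"
    unfolding causal_bound_def by (intro Sup_upper) auto
  moreover have "Iobj p / ln 2 \<le> Iobj p' / ln 2" using p'(6) by (simp add: divide_right_mono)
  ultimately show ?thesis by (meson ereal_less_eq(3) order_trans)
qed

end


lemma isCont_xlnx: "isCont (\<lambda>t::real. t * ln t) x"
proof (cases "x = 0")
  case False thus ?thesis by (intro continuous_intros isCont_ln)
next
  case True
  have r: "((\<lambda>t::real. t * ln t) \<longlongrightarrow> 0) (at_right 0)" by real_asymp
  have l: "((\<lambda>t::real. t * ln t) \<longlongrightarrow> 0) (at_left 0)"
  proof -
    have "((\<lambda>t::real. (- t) * ln (- t)) \<longlongrightarrow> 0) (at_left 0)" by real_asymp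
    moreover have "(\<lambda>t::real. (- t) * ln (- t)) = (\<lambda>t. - (t * ln t))" by (simp add: ln_minus)
    ultimately have "((\<lambda>t::real. - (t * ln t)) \<longlongrightarrow> 0) (at_left 0)" by simp
    hence "((\<lambda>t::real. - (- (t * ln t))) \<longlongrightarrow> - 0) (at_left 0)" by (intro tendsto_minus)
    thus ?thesis by simp
  qed
  have "((\<lambda>t::real. t * ln t) \<longlongrightarrow> 0) (at 0)" by (rule filterlim_split_at[OF l r])
  thus ?thesis using True by (simp add: isCont_def)
qed

lemma tendsto_xlnx: "(f \<longlongrightarrow> (a::real)) F \<Longrightarrow> ((\<lambda>n. f n * ln (f n)) \<longlongrightarrow> a * ln a) F"
  using isCont_tendsto_compose[OF isCont_xlnx[of a]] by blast

lemma finite_subseq: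
  fixes f :: "nat \<Rightarrow> 'a::finite \<Rightarrow> real"
  assumes bd: "\<And>n u. 0 \<le> f n u \<and> f n u \<le> 1"
  shows "\<exists>r L. strict_mono r \<and> (\<forall>u. (\<lambda>j. f (r j) u) \<longlonglongrightarrow> L u)"
proof -
  have "\<And>S::'a set. finite S \<Longrightarrow> \<exists>r L. strict_mono r \<and> (\<forall>u\<in>S. (\<lambda>j. f (r j) u) \<longlonglongrightarrow> L u)"
  proof -
    fix S :: "'a set" assume "finite S"
    thus "\<exists>r L. strict_mono r \<and> (\<forall>u\<in>S. (\<lambda>j. f (r j) u) \<longlonglongrightarrow> L u)"
    proof (induction S rule: finite_induct)
      case empty thus ?case by (intro exI[of _ id]) (auto simp: strict_mono_def)
    next
      case (insert a S)
      then obtain r L where r: "strict_mono r" "\<forall>u\<in>S. (\<lambda>j. f (r j) u) \<longlonglongrightarrow> L u" by blast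
      have "\<And>j. \<bar>f (r j) a\<bar> \<le> 1" using bd by (simp add: abs_le_iff)
      hence "bounded (range (\<lambda>j. f (r j) a))" by (intro boundedI[where B=1]) auto
      then obtain la s where s: "strict_mono s" "((\<lambda>j. f (r j) a) \<circ> s) \<longlonglongrightarrow> la"
        using bounded_imp_convergent_subsequence by blast
      define L' where "L' u = (if u = a then la else L u)" for u
      have "strict_mono (r \<circ> s)" using r(1) s(1) by (simp add: strict_mono_o)
      moreover have "\<forall>u\<in>insert a S. (\<lambda>j. f ((r \<circ> s) j) u) \<longlonglongrightarrow> L' u"
      proof
        fix u assume "u \<in> insert a S"
        show "(\<lambda>j. f ((r \<circ> s) j) u) \<longlonglongrightarrow> L' u"
        proof (cases "u = a")
          case True thus ?thesis using s(2) by (simp add: L'_def o_def)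
        next
          case False
          hence "u \<in> S" using \<open>u \<in> insert a S\<close> by simp
          hence "((\<lambda>j. f (r j) u) \<circ> s) \<longlonglongrightarrow> L u" using r(2) s(1) by (intro LIMSEQ_subseq_LIMSEQ) auto
          thus ?thesis using False by (simp add: L'_def o_def)
        qed
      qed
      ultimately show ?case by blast
    qed
  qed
  from this[of UNIV] show ?thesis by simp
qed

lemma gibbs_strict:
  fixes P Q :: "'a::finite \<Rightarrow> real"
  assumes Pn: "\<And>z. 0 \<le> P z" and Ps: "(\<Sum>z\<in>UNIV. P z) = 1" and Qp: "\<And>z. 0 < Q z" and Qs: "(\<Sum>z\<in>UNIV. Q z) = 1"
    and D: "(\<Sum>z\<in>UNIV. P z * ln (P z) - P z * ln (Q z)) \<le> 0"
  shows "P = Q"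
proof -
  define g where "g z = Q z - P z + (P z * ln (P z) - P z * ln (Q z))" for z
  have g_nn: "0 \<le> g z" for z
  proof (cases "P z = 0")
    case True thus ?thesis using Qp[of z] by (simp add: g_def)
  next
    case False
    hence pp: "0 < P z" using Pn[of z] by simp
    have "ln (Q z / P z) \<le> Q z / P z - 1" using pp Qp[of z] by (intro ln_le_minus_one) simp
    hence "P z * ln (Q z / P z) \<le> P z * (Q z / P z - 1)" using pp by (intro mult_left_mono) auto
    moreover have "ln (Q z / P z) = ln (Q z) - ln (P z)" using pp Qp[of z] by (simp add: ln_div)
    moreover have "P z * (Q z / P z - 1) = Q z - P z" using pp by (simp add: field_simps)
    ultimately have "P z * (ln (Q z) - ln (P z)) \<le> Q z - P z" by simp
    thus ?thesis by (simp add: g_def right_diff_distrib)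
  qed
  have "(\<Sum>z\<in>UNIV. g z) = (\<Sum>z\<in>UNIV. P z * ln (P z) - P z * ln (Q z))"
    by (simp add: g_def sum.distrib sum_subtractf Ps Qs)
  hence "(\<Sum>z\<in>UNIV. g z) \<le> 0" using D by simp
  hence g0: "\<forall>z\<in>UNIV. g z = 0" using g_nn by (intro sum_nonneg_eq_0_iff[THEN iffD1]) (auto intro: order_antisym sum_nonneg)
  show ?thesis
  proof
    fix z
    show "P z = Q z"
    proof (cases "P z = 0")
      case True
      have "g z = Q z" using True by (simp add: g_def)
      thus ?thesis using g0 Qp[of z] by simp
    next
      case False
      hence pp: "0 < P z" using Pn[of z] by simp
      have "ln (Q z / P z) = ln (Q z) - ln (P z)" using pp Qp[of z] by (simp add: ln_div)
      have "g z = 0" using g0 by simp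
      hence "P z * (ln (Q z) - ln (P z)) = Q z - P z" by (simp add: g_def right_diff_distrib)
      moreover have "P z * (Q z / P z - 1) = Q z - P z" using pp by (simp add: field_simps)
      ultimately have "P z * ln (Q z / P z) = P z * (Q z / P z - 1)" using \<open>ln (Q z / P z) = ln (Q z) - ln (P z)\<close> by simp
      hence "ln (Q z / P z) = Q z / P z - 1" using pp by simp
      hence "Q z / P z = 1" using pp Qp[of z] by (intro ln_eq_minus_one) simp_all
      thus ?thesis using pp by simp
    qed
  qed
qed



context code begin

lemma err_bounds: "0 \<le> err_prob PS W n M K E w dec \<and> err_prob PS W n M K E w dec \<le> 1"
proof
  show "0 \<le> err_prob PS W n M K E w dec" unfolding err_Jsum by (intro Jsum_nonneg mult_nonneg_nonneg J_nn) auto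
  have "err_prob PS W n M K E w dec \<le> Jsum (\<lambda>m k e ss ys zs. J e m k ss ys zs)"
    unfolding err_Jsum by (intro Jsum_mono) (auto intro: J_nn)
  thus "err_prob PS W n M K E w dec \<le> 1" using Jsum_one by simp
qed

lemma exists_p:
  assumes Qp: "\<And>z. 0 < Qz z"
  shows "\<exists>p. (\<forall>u. 0 \<le> p u) \<and> (\<Sum>u\<in>UNIV. p u) = 1 \<and> exp_cost PS W b n M K E w = cst b p
    \<and> real n * Dz (qZ p) Qz / ln 2 \<le> kl_div n (out_z PS W n M K E w) (\<lambda>zs. \<Prod>i<length zs. Qz (zs ! i))
    \<and> ln (real M) - ln 2 - err_prob PS W n M K E w dec * ln (real M) \<le> real n * Iobj p"
  using pbar_nn pbar_sum exp_cost_eq[of b] kl_bound[OF Qp] rate_bound[of dec]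
  by (intro exI[of _ pbar]) (auto simp: cst_def zq_def outz_def)

end

context chan begin

lemma qY_tendsto: "(\<And>u. (\<lambda>j. P j u) \<longlonglongrightarrow> L u) \<Longrightarrow> (\<lambda>j. qY (P j) y) \<longlonglongrightarrow> qY L y"
  unfolding qY_def by (intro tendsto_intros) auto

lemma qZ_tendsto: "(\<And>u. (\<lambda>j. P j u) \<longlonglongrightarrow> L u) \<Longrightarrow> (\<lambda>j. qZ (P j) z) \<longlonglongrightarrow> qZ L z"
  unfolding qZ_def by (intro tendsto_intros) auto

lemma Iobj_tendsto: "(\<And>u. (\<lambda>j. P j u) \<longlonglongrightarrow> L u) \<Longrightarrow> (\<lambda>j. Iobj (P j)) \<longlonglongrightarrow> Iobj L"
  unfolding Iobj_def by (intro tendsto_intros tendsto_xlnx qY_tendsto) auto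

lemma Dz_tendsto: "(\<And>u. (\<lambda>j. P j u) \<longlonglongrightarrow> L u) \<Longrightarrow> (\<lambda>j. Dz (qZ (P j)) Q) \<longlonglongrightarrow> Dz (qZ L) Q"
  unfolding Dz_def by (intro tendsto_intros tendsto_xlnx qZ_tendsto) auto

lemma cst_tendsto: "(\<And>u. (\<lambda>j. P j u) \<longlonglongrightarrow> L u) \<Longrightarrow> (\<lambda>j. cst b (P j)) \<longlonglongrightarrow> cst b L"
  unfolding cst_def by (intro tendsto_intros) auto

end


lemma set_size_pos: "0 < set_size n R"
  unfolding set_size_def by simp

lemma set_size_ge: "2 powr (real n * R) \<le> real (set_size n R)"
  unfolding set_size_def by (simp add: real_nat_ceiling_ge)

lemma ln_set_size: "real n * R * ln 2 \<le> ln (real (set_size n R))"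
proof -
  have "ln (2 powr (real n * R)) \<le> ln (real (set_size n R))"
    using set_size_ge[of n R] set_size_pos[of n R] by (subst ln_le_cancel_iff) auto
  thus ?thesis by (simp add: ln_powr)
qed

theorem theorem1:
  fixes PS :: "'s::finite \<Rightarrow> real"
    and W :: "'s \<Rightarrow> 'x::finite \<Rightarrow> 'y::finite \<Rightarrow> 'z::finite \<Rightarrow> real"
    and x0 :: 'x
    and b :: "'x \<Rightarrow> real"
    and RK B :: real
  assumes "\<forall>s. 0 \<le> PS s" and "(\<Sum>s\<in>UNIV. PS s) = 1"
    and "\<forall>s x y z. 0 \<le> W s x y z"
    and "\<forall>s x. (\<Sum>y\<in>UNIV. \<Sum>z\<in>UNIV. W s x y z) = 1"
    and "\<forall>z. 0 < Q0 PS W x0 z"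
    and "\<forall>x. 0 \<le> b x"
    and "0 \<le> RK" and "0 \<le> B"
  shows "covert_capacity_causal PS W x0 b RK B \<le> causal_bound PS W x0 b B"
proof -
  interpret chan PS W using assms(1-4) by unfold_locales auto
  have Qp: "\<And>z. 0 < Q0 PS W x0 z" using assms(5) by simp
  have Qs: "(\<Sum>z\<in>UNIV. Q0 PS W x0 z) = 1"
  proof -
    have "\<And>z. Q0 PS W x0 z = TZ (\<lambda>s. x0) z" by (simp add: Q0_def TZ_def)
    thus ?thesis by (simp add: TZ_sum)
  qed
  show ?thesis unfolding covert_capacity_causal_def
  proof (rule Sup_least)
    fix x assume "x \<in> ereal ` {R. achievable_causal PS W x0 b RK B R}"
    then obtain R where x: "x = ereal R" and ach: "achievable_causal PS W x0 b RK B R" by auto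
    from ach obtain E :: "nat \<Rightarrow> ('s,'x) cenc set" and w and dec :: "nat \<Rightarrow> nat \<Rightarrow> 'y list \<Rightarrow> nat"
      where vc: "\<forall>n. valid_code (E n) (w n)"
      and ls: "limsup (\<lambda>n. ereal (exp_cost PS W b n (set_size n R) (set_size n RK) (E n) (w n))) \<le> ereal B"
      and er: "(\<lambda>n. err_prob PS W n (set_size n R) (set_size n RK) (E n) (w n) (dec n)) \<longlonglongrightarrow> 0"
      and kl: "(\<lambda>n. kl_div n (out_z PS W n (set_size n R) (set_size n RK) (E n) (w n)) (Q0_n PS W x0)) \<longlonglongrightarrow> 0"
      unfolding achievable_causal_def by blast
    define a where "a n = exp_cost PS W b n (set_size n R) (set_size n RK) (E n) (w n)" for n
    define er' where "er' n = err_prob PS W n (set_size n R) (set_size n RK) (E n) (w n) (dec n)" for n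
    define kl' where "kl' n = kl_div n (out_z PS W n (set_size n R) (set_size n RK) (E n) (w n)) (Q0_n PS W x0)" for n
    have Q0n: "Q0_n PS W x0 = (\<lambda>zs. \<Prod>i<length zs. Q0 PS W x0 (zs ! i))" by (simp add: Q0_n_def[abs_def])
    have code: "code PS W n (set_size n R) (set_size n RK) (E n) (w n)" if "0 < n" for n
      using vc that set_size_pos[of n R] set_size_pos[of n RK]
      by unfold_locales (auto simp: valid_code_def)
    have "\<forall>n. \<exists>p. 0 < n \<longrightarrow> ((\<forall>u. 0 \<le> p u) \<and> (\<Sum>u\<in>UNIV. p u) = 1 \<and> a n = cst b p
      \<and> real n * Dz (qZ p) (Q0 PS W x0) / ln 2 \<le> kl' n
      \<and> ln (real (set_size n R)) - ln 2 - er' n * ln (real (set_size n R)) \<le> real n * Iobj p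
      \<and> 0 \<le> er' n \<and> er' n \<le> 1)"
    proof
      fix n show "\<exists>p. 0 < n \<longrightarrow> ((\<forall>u. 0 \<le> p u) \<and> (\<Sum>u\<in>UNIV. p u) = 1 \<and> a n = cst b p
        \<and> real n * Dz (qZ p) (Q0 PS W x0) / ln 2 \<le> kl' n
        \<and> ln (real (set_size n R)) - ln 2 - er' n * ln (real (set_size n R)) \<le> real n * Iobj p
        \<and> 0 \<le> er' n \<and> er' n \<le> 1)"
      proof (cases "0 < n")
        case True
        interpret c: code PS W n "set_size n R" "set_size n RK" "E n" "w n" by (rule code[OF True])
        show ?thesis using c.exists_p[OF Qp, where b=b and dec="dec n"] c.err_bounds[of "dec n"]
          by (auto simp: a_def er'_def kl'_def Q0n)
      qed simp
    qed
    then obtain p where p: "\<And>n. 0 < n \<Longrightarrow> (\<forall>u. 0 \<le> p n u) \<and> (\<Sum>u\<in>UNIV. p n u) = 1 \<and> a n = cst b (p n)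
      \<and> real n * Dz (qZ (p n)) (Q0 PS W x0) / ln 2 \<le> kl' n
      \<and> ln (real (set_size n R)) - ln 2 - er' n * ln (real (set_size n R)) \<le> real n * Iobj (p n)
      \<and> 0 \<le> er' n \<and> er' n \<le> 1"
      by metis
    define q where "q n = p (Suc n)" for n
    have q_nn: "\<And>n u. 0 \<le> q n u" using p by (simp add: q_def)
    have q_sum: "\<And>n. (\<Sum>u\<in>UNIV. q n u) = 1" using p by (simp add: q_def)
    have q_le: "q n u \<le> 1" for n u
    proof -
      have "q n u \<le> (\<Sum>u\<in>UNIV. q n u)" by (rule member_le_sum) (auto intro: q_nn)
      thus ?thesis using q_sum by simp
    qed
    obtain r L where r: "strict_mono r" and conv: "\<And>u. (\<lambda>j. q (r j) u) \<longlonglongrightarrow> L u"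
      using finite_subseq[of q] q_nn q_le by blast
    define s where "s j = Suc (r j)" for j
    have s_mono: "strict_mono s" using r by (simp add: strict_mono_def s_def)
    have qs: "q (r j) = p (s j)" for j by (simp add: q_def s_def)
    have ps: "(\<forall>u. 0 \<le> q (r j) u) \<and> (\<Sum>u\<in>UNIV. q (r j) u) = 1 \<and> a (s j) = cst b (q (r j))
      \<and> real (s j) * Dz (qZ (q (r j))) (Q0 PS W x0) / ln 2 \<le> kl' (s j)
      \<and> ln (real (set_size (s j) R)) - ln 2 - er' (s j) * ln (real (set_size (s j) R)) \<le> real (s j) * Iobj (q (r j))
      \<and> 0 \<le> er' (s j) \<and> er' (s j) \<le> 1" for j
      unfolding qs by (rule p) (simp add: s_def)
    have inv0: "(\<lambda>j. inverse (real (s j))) \<longlonglongrightarrow> 0"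
    proof -
      have "((\<lambda>n. inverse (real (Suc n))) \<circ> r) \<longlonglongrightarrow> 0"
        by (rule LIMSEQ_subseq_LIMSEQ[OF LIMSEQ_inverse_real_of_nat r])
      thus ?thesis by (simp add: o_def s_def)
    qed
    have er_s: "(\<lambda>j. er' (s j)) \<longlonglongrightarrow> 0"
      using LIMSEQ_subseq_LIMSEQ[OF er s_mono] by (simp add: o_def er'_def)
    have kl_s: "(\<lambda>j. kl' (s j)) \<longlonglongrightarrow> 0"
      using LIMSEQ_subseq_LIMSEQ[OF kl s_mono] by (simp add: o_def kl'_def)
    have L_nn: "\<And>u. 0 \<le> L u"
      using conv q_nn by (intro LIMSEQ_le_const[OF conv]) auto
    have L_sum: "(\<Sum>u\<in>UNIV. L u) = 1"
    proof -
      have "(\<lambda>j. \<Sum>u\<in>UNIV. q (r j) u) \<longlonglongrightarrow> (\<Sum>u\<in>UNIV. L u)" by (intro tendsto_sum conv)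
      thus ?thesis using q_sum by (simp add: LIMSEQ_const_iff)
    qed
    have cost: "cst b L \<le> B"
    proof -
      have "(\<lambda>j. a (s j)) \<longlonglongrightarrow> cst b L" using ps cst_tendsto[OF conv] by simp
      hence "(\<lambda>j. ereal (a (s j))) \<longlonglongrightarrow> ereal (cst b L)" by (rule tendsto_ereal)
      hence h1: "limsup ((\<lambda>n. ereal (a n)) \<circ> s) = ereal (cst b L)"
        by (intro lim_imp_Limsup) (simp_all add: o_def)
      have h2: "limsup ((\<lambda>n. ereal (a n)) \<circ> s) \<le> limsup (\<lambda>n. ereal (a n))"
        by (rule limsup_subseq_mono[OF s_mono])
      have h3: "limsup (\<lambda>n. ereal (a n)) \<le> ereal B" using ls by (simp add: a_def)
      have "ereal (cst b L) \<le> ereal B" using h1 h2 h3 by (simp only: flip: h1)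
      thus ?thesis by simp
    qed
    have qzL: "qZ L = Q0 PS W x0"
    proof (rule gibbs_strict)
      show "\<And>z. 0 \<le> qZ L z" by (rule qZ_nn[OF L_nn])
      show "(\<Sum>z\<in>UNIV. qZ L z) = 1" by (rule qZ_sum[OF L_sum])
      show "\<And>z. 0 < Q0 PS W x0 z" by (rule Qp)
      show "(\<Sum>z\<in>UNIV. Q0 PS W x0 z) = 1" by (rule Qs)
      have le: "Dz (qZ (q (r j))) (Q0 PS W x0) \<le> kl' (s j) * ln 2 * inverse (real (s j))" for j
      proof -
        have "real (s j) * Dz (qZ (q (r j))) (Q0 PS W x0) / ln 2 \<le> kl' (s j)" using ps by simp
        moreover have "0 < real (s j)" by (simp add: s_def)
        ultimately show ?thesis by (simp add: field_simps)
      qed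
      have lim0: "(\<lambda>j. kl' (s j) * ln 2 * inverse (real (s j))) \<longlonglongrightarrow> 0 * ln 2 * 0"
        by (intro tendsto_mult kl_s inv0 tendsto_const)
      have D1: "(\<lambda>j. Dz (qZ (q (r j))) (Q0 PS W x0)) \<longlonglongrightarrow> Dz (qZ L) (Q0 PS W x0)"
        by (rule Dz_tendsto) (rule conv)
      have "Dz (qZ L) (Q0 PS W x0) \<le> 0 * ln 2 * 0"
        by (rule LIMSEQ_le[OF D1 lim0]) (use le in auto)
      hence "Dz (qZ L) (Q0 PS W x0) \<le> 0" by simp
      thus "(\<Sum>z\<in>UNIV. qZ L z * ln (qZ L z) - qZ L z * ln (Q0 PS W x0 z)) \<le> 0" by (simp add: Dz_def)
    qed
    have rate: "R \<le> Iobj L / ln 2"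
    proof -
      have le: "R * (1 - er' (s j)) - inverse (real (s j)) \<le> Iobj (q (r j)) / ln 2" for j
      proof -
        define n where "n = s j"
        have np: "0 < real n" by (simp add: n_def s_def)
        have e: "0 \<le> er' n" "er' n \<le> 1" and rb: "ln (real (set_size n R)) - ln 2 - er' n * ln (real (set_size n R)) \<le> real n * Iobj (q (r j))"
          using ps[of j] by (auto simp: n_def)
        have "(1 - er' n) * (real n * R * ln 2) \<le> (1 - er' n) * ln (real (set_size n R))"
          using e ln_set_size[of n R] by (intro mult_left_mono) auto
        hence "(1 - er' n) * (real n * R * ln 2) \<le> real n * Iobj (q (r j)) + ln 2" using rb by (simp add: algebra_simps)
        hence "(R * (1 - er' n)) * (real n * ln 2) \<le> real n * Iobj (q (r j)) + ln 2" by (simp add: algebra_simps)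
        hence "R * (1 - er' n) \<le> (real n * Iobj (q (r j)) + ln 2) / (real n * ln 2)"
          using np by (simp add: pos_le_divide_eq)
        also have "\<dots> = Iobj (q (r j)) / ln 2 + inverse (real n)" using np by (simp add: field_simps)
        finally show ?thesis by (simp add: n_def)
      qed
      have "(\<lambda>j. R * (1 - er' (s j)) - inverse (real (s j))) \<longlonglongrightarrow> R * (1 - 0) - 0"
        by (intro tendsto_intros er_s inv0)
      moreover have "(\<lambda>j. Iobj (q (r j)) / ln 2) \<longlonglongrightarrow> Iobj L / ln 2"
      proof (rule tendsto_divide)
        show "(\<lambda>j. Iobj (q (r j))) \<longlonglongrightarrow> Iobj L" by (rule Iobj_tendsto) (rule conv)
      qed auto
      ultimately have "R * (1 - 0) - 0 \<le> Iobj L / ln 2"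
        by (rule LIMSEQ_le) (use le in auto)
      thus ?thesis by simp
    qed
    have "ereal (Iobj L / ln 2) \<le> causal_bound PS W x0 b B"
      by (rule to_bound[OF L_nn L_sum]) (use qzL cost in auto)
    thus "x \<le> causal_bound PS W x0 b B" using rate x by (meson ereal_less_eq(3) order_trans)
  qed
qed



end
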